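(* Let $A\in\mathcal L(W,V)\setminus\Sigma$ be injective and let $L:=\operatorname{Image}(A)\in\mathrm{Gr}(V,m)$. (a) If $L\cap\operatorname{int}(K)\neq\emptyset$, then $$\frac{1}{\|A\|}\le\frac{\operatorname{dist}(L,\Sigma_m)}{\mathrm{Rdist}(A,\Sigma)}\le\|A^{-1}\|,$$ equivalently $\frac{1}{\operatorname{dist}(L,\Sigma_m)}\le\frac{\|A\|}{\mathrm{Rdist}(A,\Sigma)}\le\frac{\kappa(A)}{\operatorname{dist}(L,\Sigma_m)}$, where $\kappa(A):=\|A\|\cdot\|A^{-1}\|$. (b) If $L^\perp\cap\operatorname{int}(K^* )\neq\emptyset$, then $$\frac{1}{\|A\|}\le\frac{\overline{\operatorname{dist}}(\Sigma_m,L)}{\mathrm{Rdist}(A,\Sigma)}\le\|A^{-1}\|,$$ equivalently $\frac{1}{\overline{\operatorname{dist}}(\Sigma_m,L)}\le\frac{\|A\|}{\mathrm{Rdist}(A,\Sigma)}\le\frac{\kappa(A)}{\overline{\operatorname{dist}}(\Sigma_m,L)}$.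
   Context: $V$ is a finite-dimensional real vector space with inner product $\langle\cdot,\cdot\rangle$, $K\subseteq V$ a regular closed convex cone (closed, convex, pointed, nonempty interior) with dual cone $K^*:=\{u:\langle u,x\rangle\ge0\ \forall x\in K\}$; $L^\perp$ is the orthogonal complement. $\|\cdot\|,|||\cdot|||$ are two arbitrary norms on $V$. $\mathrm{Gr}(V,m)$ is the set of $m$-dimensional subspaces of $V$, $1\le m<\dim V$. For $L_1,L_2\in\mathrm{Gr}(V,m)$: $\operatorname{dist}(L_1,L_2):=\max_{x\in L_1,x\neq0}\min_{v\in L_2}\frac{|||x-v|||}{\|x\|}$, $\overline{\operatorname{dist}}(L_1,L_2):=\max_{x\in L_1,x\neq0}\inf_{v\in L_2,v\neq0}\frac{|||x-v|||}{\|v\|}$. $\Sigma_m:=\{L\in\mathrm{Gr}(V,m):L\cap K\neq\{0\},\ L^\perp\cap K^*\neq\{0\}\}$, $\operatorname{dist}(L,\Sigma_m):=\inf_{\tilde L\in\Sigma_m}\operatorname{dist}(L,\tilde L)$, $\overline{\operatorname{dist}}(\Sigma_m,L):=\inf_{\tilde L\in\Sigma_m}\overline{\operatorname{dist}}(\tilde L,L)$. $W$ is a finite-dimensional real inner product space with $\dim W<\dim V$, equipped with a norm $|\cdot|$. $\mathcal L(W,V)$ is the set of linear maps $W\to V$; for $A\in\mathcal L(W,V)$, $A^*:V\to W$ is its adjoint, $\|A\|:=\max_{|w|=1}\|Aw\|$, $|||A|||:=\max_{|w|=1}|||Aw|||$, and for injective $A$, $\|A^{-1}\|:=\max_{x\in\operatorname{Image}(A),\|x\|=1}|A^{-1}x|$.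 $A$ is well-posed if one of the systems "$Ax\in K\setminus\{0\}$ for some $x\in W$" or "$A^*u=0$ for some $u\in K^*\setminus\{0\}$" is feasible and remains feasible for all $\tilde A$ sufficiently close to $A$; $\Sigma\subseteq\mathcal L(W,V)$ is the set of mappings that are not well-posed, and $\mathrm{Rdist}(A,\Sigma):=\inf\{|||A-\tilde A|||:\tilde A\in\Sigma\}$. *)

theory Defs
  imports "HOL-Analysis.Analysis"
begin

definition is_norm :: "('a::real_vector \<Rightarrow> real) \<Rightarrow> bool" where
  "is_norm N \<longleftrightarrow> (\<forall>x. 0 \<le> N x) \<and> (\<forall>x. N x = 0 \<longleftrightarrow> x = 0)
     \<and> (\<forall>c x. N (c *\<^sub>R x) = \<bar>c\<bar> * N x) \<and> (\<forall>x y. N (x + y) \<le> N x + N y)"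

definition regular_cone :: "'a::euclidean_space set \<Rightarrow> bool" where
  "regular_cone K \<longleftrightarrow> closed K \<and> convex K \<and> cone K \<and> K \<noteq> {}
     \<and> K \<inter> uminus ` K \<subseteq> {0} \<and> interior K \<noteq> {}"

definition dual_cone :: "'a::euclidean_space set \<Rightarrow> 'a set" where
  "dual_cone K = {u. \<forall>x\<in>K. inner u x \<ge> 0}"

definition Gr :: "nat \<Rightarrow> 'a::euclidean_space set set" where
  "Gr m = {L. subspace L \<and> dim L = m}"

definition subsp_dist :: "('a::euclidean_space \<Rightarrow> real) \<Rightarrow> ('a \<Rightarrow> real) \<Rightarrow> 'a set \<Rightarrow> 'a set \<Rightarrow> real" where
  "subsp_dist n1 n2 L1 L2 = (SUP x\<in>L1 - {0}. INF v\<in>L2. n2 (x - v) / n1 x)"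

definition subsp_distbar :: "('a::euclidean_space \<Rightarrow> real) \<Rightarrow> ('a \<Rightarrow> real) \<Rightarrow> 'a set \<Rightarrow> 'a set \<Rightarrow> real" where
  "subsp_distbar n1 n2 L1 L2 = (SUP x\<in>L1 - {0}. INF v\<in>L2 - {0}. n2 (x - v) / n1 v)"

definition Sigma_m :: "'a::euclidean_space set \<Rightarrow> nat \<Rightarrow> 'a set set" where
  "Sigma_m K m = {L \<in> Gr m. L \<inter> K \<noteq> {0} \<and> orthogonal_comp L \<inter> dual_cone K \<noteq> {0}}"

definition dist_to_Sigma_m :: "('a::euclidean_space \<Rightarrow> real) \<Rightarrow> ('a \<Rightarrow> real) \<Rightarrow> 'a set \<Rightarrow> nat \<Rightarrow> 'a set \<Rightarrow> real" where
  "dist_to_Sigma_m n1 n2 K m L = (INF L'\<in>Sigma_m K m. subsp_dist n1 n2 L L')"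

definition distbar_from_Sigma_m :: "('a::euclidean_space \<Rightarrow> real) \<Rightarrow> ('a \<Rightarrow> real) \<Rightarrow> 'a set \<Rightarrow> nat \<Rightarrow> 'a set \<Rightarrow> real" where
  "distbar_from_Sigma_m n1 n2 K m L = (INF L'\<in>Sigma_m K m. subsp_distbar n1 n2 L' L)"

definition opnorm :: "('w::real_vector \<Rightarrow> real) \<Rightarrow> ('v \<Rightarrow> real) \<Rightarrow> ('w \<Rightarrow> 'v) \<Rightarrow> real" where
  "opnorm M N A = (SUP w\<in>{w. M w = 1}. N (A w))"

definition inv_opnorm :: "('w::real_vector \<Rightarrow> real) \<Rightarrow> ('v \<Rightarrow> real) \<Rightarrow> ('w \<Rightarrow> 'v) \<Rightarrow> real" where
  "inv_opnorm M N A = (SUP x\<in>{x \<in> range A. N x = 1}. M (inv A x))"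

definition primal_feasible :: "'v::euclidean_space set \<Rightarrow> ('w::euclidean_space \<Rightarrow> 'v) \<Rightarrow> bool" where
  "primal_feasible K A \<longleftrightarrow> (\<exists>x. A x \<in> K - {0})"

definition dual_feasible :: "'v::euclidean_space set \<Rightarrow> ('w::euclidean_space \<Rightarrow> 'v) \<Rightarrow> bool" where
  "dual_feasible K A \<longleftrightarrow> (\<exists>u \<in> dual_cone K - {0}. adjoint A u = 0)"

text \<open>Well-posedness: one of the systems is feasible and remains feasible for all
  linear maps sufficiently close to A (closeness measured in the operator norm
  induced by |.| and |||.|||; all norms on L(W,V) are equivalent).\<close>
definition well_posed :: "('w::euclidean_space \<Rightarrow> real) \<Rightarrow> ('v::euclidean_space \<Rightarrow> real) \<Rightarrow> 'v set \<Rightarrow> ('w \<Rightarrow> 'v) \<Rightarrow> bool" where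
  "well_posed nW n2 K A \<longleftrightarrow>
     (\<exists>\<epsilon>>0. \<forall>A'. linear A' \<and> opnorm nW n2 (\<lambda>w. A' w - A w) < \<epsilon> \<longrightarrow> primal_feasible K A')
   \<or> (\<exists>\<epsilon>>0. \<forall>A'. linear A' \<and> opnorm nW n2 (\<lambda>w. A' w - A w) < \<epsilon> \<longrightarrow> dual_feasible K A')"

definition ill_posed_set :: "('w::euclidean_space \<Rightarrow> real) \<Rightarrow> ('v::euclidean_space \<Rightarrow> real) \<Rightarrow> 'v set \<Rightarrow> ('w \<Rightarrow> 'v) set" where
  "ill_posed_set nW n2 K = {A. linear A \<and> \<not> well_posed nW n2 K A}"

definition Rdist :: "('w::euclidean_space \<Rightarrow> real) \<Rightarrow> ('v::euclidean_space \<Rightarrow> real) \<Rightarrow> 'v set \<Rightarrow> ('w \<Rightarrow> 'v) \<Rightarrow> real" where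
  "Rdist nW n2 K A = (INF A'\<in>ill_posed_set nW n2 K. opnorm nW n2 (\<lambda>w. A w - A' w))"

end

theory Submission
  imports Defs
begin


lemma isnD:
  assumes "is_norm N"
  shows "N x \<ge> 0" "N x = 0 \<longleftrightarrow> x = 0" "N (c *\<^sub>R x) = \<bar>c\<bar> * N x" "N (x + y) \<le> N x + N y"
  using assms unfolding is_norm_def by auto

lemma isn_0: "is_norm N \<Longrightarrow> N 0 = 0" using isnD(2) by blast

lemma isn_minus: "is_norm N \<Longrightarrow> N (- x) = N x"
  using isnD(3)[of N "-1" x] by simp

lemma isn_diff_commute: "is_norm N \<Longrightarrow> N (x - y) = N (y - x)"
  using isn_minus[of N "x - y"] by simp

lemma isn_triangle_diff: "is_norm N \<Longrightarrow> N (x - y) \<le> N x + N y"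
  using isnD(4)[of N x "-y"] isn_minus[of N y] by simp

lemma isn_rev_tri: "is_norm N \<Longrightarrow> \<bar>N x - N y\<bar> \<le> N (x - y)"
proof -
  assume n: "is_norm N"
  have "N x \<le> N (x - y) + N y" using isnD(4)[OF n, of "x - y" y] by simp
  moreover have "N y \<le> N (x - y) + N x" using isnD(4)[OF n, of "y - x" x] isn_diff_commute[OF n, of x y] by simp
  ultimately show ?thesis by linarith
qed

lemma isn_sum: "is_norm N \<Longrightarrow> N (sum f S) \<le> (\<Sum>i\<in>S. N (f i))"
proof (induction S rule: infinite_finite_induct)
  case (infinite A) then show ?case by (simp add: isn_0)
next
  case empty then show ?case by (simp add: isn_0)
next
  case (insert x F)
  then show ?case using isnD(4)[OF insert(4), of "f x" "sum f F"] by simp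
qed

lemma isn_upper:
  fixes N :: "'a::euclidean_space \<Rightarrow> real"
  assumes n: "is_norm N"
  obtains C where "C > 0" "\<And>x. N x \<le> C * norm x"
proof -
  define C where "C = 1 + (\<Sum>b\<in>Basis. N b)"
  have C0: "C > 0" unfolding C_def using isnD(1)[OF n] by (simp add: add_pos_nonneg sum_nonneg)
  have "N x \<le> C * norm x" for x
  proof -
    have "N x = N (\<Sum>b\<in>Basis. (x \<bullet> b) *\<^sub>R b)" by (simp add: euclidean_representation)
    also have "\<dots> \<le> (\<Sum>b\<in>Basis. N ((x \<bullet> b) *\<^sub>R b))" by (rule isn_sum[OF n])
    also have "\<dots> = (\<Sum>b\<in>Basis. \<bar>x \<bullet> b\<bar> * N b)" using isnD(3)[OF n] by simp
    also have "\<dots> \<le> (\<Sum>b\<in>Basis. norm x * N b)"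
      by (intro sum_mono mult_right_mono) (auto simp: Basis_le_norm isnD(1)[OF n])
    also have "\<dots> = norm x * (\<Sum>b\<in>Basis. N b)" by (simp add: sum_distrib_left)
    also have "\<dots> \<le> C * norm x" unfolding C_def by (simp add: algebra_simps)
    finally show ?thesis .
  qed
  then show ?thesis using C0 that by blast
qed

lemma isn_continuous:
  fixes N :: "'a::euclidean_space \<Rightarrow> real"
  assumes n: "is_norm N"
  shows "continuous_on S N"
proof -
  obtain C where C: "C > 0" "\<And>x. N x \<le> C * norm x" using isn_upper[OF n] by blast
  have "continuous_on UNIV N"
  proof (rule continuous_on_iff[THEN iffD2], intro ballI allI impI)
    fix x and e :: real assume "e > 0"
    show "\<exists>d>0. \<forall>x'\<in>UNIV. dist x' x < d \<longrightarrow> dist (N x') (N x) < e"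
    proof (intro exI[of _ "e / C"] conjI ballI impI)
      show "e / C > 0" using \<open>e>0\<close> C by simp
      fix x' assume "dist x' x < e / C"
      then have "C * norm (x' - x) < e" using C by (simp add: dist_norm field_simps)
      moreover have "\<bar>N x' - N x\<bar> \<le> C * norm (x' - x)" using isn_rev_tri[OF n] C(2) order_trans by blast
      ultimately show "dist (N x') (N x) < e" by (simp add: dist_real_def)
    qed
  qed
  then show ?thesis using continuous_on_subset by blast
qed

lemma isn_lower:
  fixes N :: "'a::euclidean_space \<Rightarrow> real"
  assumes n: "is_norm N"
  obtains c where "c > 0" "\<And>x. c * norm x \<le> N x"
proof -
  have cpt: "compact (sphere (0::'a) 1)" by simp
  have ne: "sphere (0::'a) 1 \<noteq> {}" by (simp add: sphere_eq_empty)
  obtain z where z: "z \<in> sphere 0 1" "\<And>y. y \<in> sphere 0 1 \<Longrightarrow> N z \<le> N y"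
    using continuous_attains_inf[OF cpt ne isn_continuous[OF n]] by blast
  have z0: "z \<noteq> 0" using z(1) by auto
  have cpos: "N z > 0" using isnD(1,2)[OF n, of z] z0 by auto
  have "N z * norm x \<le> N x" for x
  proof (cases "x = 0")
    case True then show ?thesis by (simp add: isn_0[OF n])
  next
    case False
    have "N z \<le> N ((1 / norm x) *\<^sub>R x)" using z(2) False by simp
    also have "\<dots> = N x / norm x" using isnD(3)[OF n] by simp
    finally show ?thesis using False by (simp add: field_simps)
  qed
  then show ?thesis using that cpos by blast
qed


lemma exists_nonzero: "\<exists>x::'a::euclidean_space. x \<noteq> 0"
  using nonzero_Basis SOME_Basis by blast

lemma isn_unit_ne:
  fixes M :: "'a::euclidean_space \<Rightarrow> real"
  assumes "is_norm M" shows "{w. M w = 1} \<noteq> {}"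
proof -
  obtain x :: 'a where "x \<noteq> 0" using exists_nonzero by blast
  then have "M x > 0" using isnD(1,2)[OF assms, of x] by auto
  then have "M ((1 / M x) *\<^sub>R x) = 1" using isnD(3)[OF assms] by simp
  then show ?thesis by blast
qed

lemma linear_bound_norm:
  fixes F :: "'a::euclidean_space \<Rightarrow> 'b::euclidean_space"
  assumes "linear F" obtains B where "B > 0" "\<And>x. norm (F x) \<le> B * norm x"
proof -
  have "bounded_linear F" using assms linear_conv_bounded_linear by blast
  then show ?thesis using bounded_linear.pos_bounded that by (metis mult.commute)
qed

lemma lin_norm_bound:
  fixes F :: "'a::euclidean_space \<Rightarrow> 'b::euclidean_space"
  assumes M: "is_norm M" and N: "is_norm N" and F: "linear F"
  obtains D where "D > 0" "\<And>w. N (F w) \<le> D * M w"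
proof -
  obtain B where B: "B > 0" "\<And>x. norm (F x) \<le> B * norm x" using linear_bound_norm[OF F] by blast
  obtain C where C: "C > 0" "\<And>x. N x \<le> C * norm x" using isn_upper[OF N] by blast
  obtain c where c: "c > 0" "\<And>x. c * norm x \<le> M x" using isn_lower[OF M] by blast
  have "N (F w) \<le> (C * B / c) * M w" for w
  proof -
    have "N (F w) \<le> C * norm (F w)" by (rule C(2))
    also have "\<dots> \<le> C * (B * norm w)" using B(2) C(1) by (simp add: mult_left_mono)
    also have "\<dots> \<le> C * (B * (M w / c))"
      using c(2)[of w] c(1) B(1) C(1) by (intro mult_left_mono) (auto simp: field_simps)
    finally show ?thesis by (simp add: field_simps)
  qed
  then show ?thesis using that B C c by (metis divide_pos_pos mult_pos_pos)
qed

lemma opnorm_bdd: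
  fixes F :: "'a::euclidean_space \<Rightarrow> 'b::euclidean_space"
  assumes M: "is_norm M" and N: "is_norm N" and F: "linear F"
  shows "bdd_above ((\<lambda>w. N (F w)) ` {w. M w = 1})"
proof -
  obtain D where "D > 0" "\<And>w. N (F w) \<le> D * M w" using lin_norm_bound[OF M N F] by blast
  then show ?thesis by (intro bdd_aboveI[of _ D]) (auto, metis mult.right_neutral)
qed

lemma opnorm_le:
  fixes F :: "'a::euclidean_space \<Rightarrow> 'b::euclidean_space"
  assumes M: "is_norm M" and N: "is_norm N" and F: "linear F"
  shows "N (F w) \<le> opnorm M N F * M w"
proof (cases "w = 0")
  case True then show ?thesis using linear_0[OF F] by (simp add: isn_0[OF N] isn_0[OF M])
next
  case False
  then have Mw: "M w > 0" using isnD(1,2)[OF M, of w] by auto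
  define w' where "w' = (1 / M w) *\<^sub>R w"
  have "M w' = 1" unfolding w'_def using isnD(3)[OF M] Mw by simp
  then have "N (F w') \<le> opnorm M N F" unfolding opnorm_def
    by (intro cSUP_upper opnorm_bdd[OF M N F]) auto
  moreover have "N (F w') = N (F w) / M w" unfolding w'_def
    using linear_scale[OF F] isnD(3)[OF N] Mw by simp
  ultimately show ?thesis using Mw by (simp add: field_simps)
qed

lemma opnorm_nonneg:
  fixes F :: "'a::euclidean_space \<Rightarrow> 'b::euclidean_space"
  assumes M: "is_norm M" and N: "is_norm N" and F: "linear F"
  shows "opnorm M N F \<ge> 0"
proof -
  obtain w where "M w = 1" using isn_unit_ne[OF M] by blast
  then show ?thesis using opnorm_le[OF M N F, of w] isnD(1)[OF N, of "F w"] by simp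
qed

lemma opnorm_leI:
  fixes F :: "'a::euclidean_space \<Rightarrow> 'b::euclidean_space"
  assumes M: "is_norm M" and "\<And>w. N (F w) \<le> c * M w"
  shows "opnorm M N F \<le> c"
  unfolding opnorm_def
  using assms(2) isn_unit_ne[OF M] by (intro cSUP_least) (auto, metis mult.right_neutral)

lemma opnorm_pos:
  fixes F :: "'a::euclidean_space \<Rightarrow> 'b::euclidean_space"
  assumes M: "is_norm M" and N: "is_norm N" and F: "linear F" and "F w \<noteq> 0"
  shows "opnorm M N F > 0"
proof -
  have "N (F w) > 0" using isnD(1,2)[OF N, of "F w"] assms(4) by auto
  moreover have "N (F w) \<le> opnorm M N F * M w" by (rule opnorm_le[OF M N F])
  moreover have "M w \<ge> 0" using isnD(1)[OF M] by blast
  ultimately show ?thesis using opnorm_nonneg[OF M N F]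
    by (metis less_eq_real_def mult_eq_0_iff order_less_le_trans)
qed

lemma linear_diff_fun: "linear A \<Longrightarrow> linear B \<Longrightarrow> linear (\<lambda>w. A w - B w)"
  by (rule linear_compose_sub)

lemma opnorm_commute:
  assumes N: "is_norm N"
  shows "opnorm M N (\<lambda>w. A w - B w) = opnorm M N (\<lambda>w. B w - A w)"
  unfolding opnorm_def using isn_diff_commute[OF N] by simp

lemma opnorm_triangle:
  fixes A B C :: "'a::euclidean_space \<Rightarrow> 'b::euclidean_space"
  assumes M: "is_norm M" and N: "is_norm N" and "linear A" "linear B" "linear C"
  shows "opnorm M N (\<lambda>w. A w - C w) \<le> opnorm M N (\<lambda>w. A w - B w) + opnorm M N (\<lambda>w. B w - C w)"
proof (rule opnorm_leI[OF M])
  fix w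
  have "N (A w - C w) \<le> N (A w - B w) + N (B w - C w)"
    using isnD(4)[OF N, of "A w - B w" "B w - C w"] by simp
  also have "\<dots> \<le> opnorm M N (\<lambda>w. A w - B w) * M w + opnorm M N (\<lambda>w. B w - C w) * M w"
    using opnorm_le[OF M N linear_diff_fun[OF assms(3,4)]] opnorm_le[OF M N linear_diff_fun[OF assms(4,5)]]
    by (intro add_mono) auto
  finally show "N (A w - C w) \<le> (opnorm M N (\<lambda>w. A w - B w) + opnorm M N (\<lambda>w. B w - C w)) * M w"
    by (simp add: algebra_simps)
qed

lemma inv_opnorm_le:
  fixes A :: "'a::euclidean_space \<Rightarrow> 'b::euclidean_space"
  assumes M: "is_norm M" and N: "is_norm N" and A: "linear A" "inj A"
  shows "M w \<le> inv_opnorm M N A * N (A w)"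
proof -
  obtain D where D: "D > 0" "\<And>x. M (inv A (A x)) \<le> D * N (A x)"
  proof -
    obtain b where b: "b > 0" "\<And>x. b * norm x \<le> norm (A x)" using linear_inj_bounded_below_pos[OF A] by blast
    obtain C where C: "C > 0" "\<And>x. M x \<le> C * norm x" using isn_upper[OF M] by blast
    obtain c where c: "c > 0" "\<And>x. c * norm x \<le> N x" using isn_lower[OF N] by blast
    have "M (inv A (A x)) \<le> (C / (b * c)) * N (A x)" for x
    proof -
      have "M (inv A (A x)) = M x" using A(2) by simp
      also have "\<dots> \<le> C * norm x" by (rule C(2))
      also have "\<dots> \<le> C * (norm (A x) / b)" using b C(1) by (intro mult_left_mono) (auto simp: field_simps mult.commute)
      also have "\<dots> \<le> C * (N (A x) / (b * c))" using c(2)[of "A x"] c(1) b(1) C(1)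
        by (intro mult_left_mono) (auto simp: field_simps)
      finally show ?thesis by (simp add: field_simps)
    qed
    then show ?thesis using that C b c by (metis divide_pos_pos mult_pos_pos)
  qed
  have bdd: "bdd_above ((\<lambda>x. M (inv A x)) ` {x \<in> range A. N x = 1})"
    using D by (intro bdd_aboveI[of _ D]) (auto, metis mult.right_neutral)
  show ?thesis
  proof (cases "w = 0")
    case True then show ?thesis using linear_0[OF A(1)] by (simp add: isn_0[OF N] isn_0[OF M])
  next
    case False
    then have Aw: "A w \<noteq> 0" using A linear_0 by (metis injD)
    then have NA: "N (A w) > 0" using isnD(1,2)[OF N, of "A w"] by auto
    define x where "x = (1 / N (A w)) *\<^sub>R A w"
    have xr: "x = A ((1 / N (A w)) *\<^sub>R w)" unfolding x_def using linear_scale[OF A(1)] by simp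
    have "N x = 1" unfolding x_def using isnD(3)[OF N] NA by simp
    then have "M (inv A x) \<le> inv_opnorm M N A" unfolding inv_opnorm_def
      using xr by (intro cSUP_upper bdd) auto
    moreover have "M (inv A x) = M w / N (A w)" unfolding xr using A(2) isnD(3)[OF M] NA by simp
    ultimately show ?thesis using NA by (simp add: field_simps)
  qed
qed

lemma inv_opnorm_pos:
  fixes A :: "'a::euclidean_space \<Rightarrow> 'b::euclidean_space"
  assumes M: "is_norm M" and N: "is_norm N" and A: "linear A" "inj A"
  shows "inv_opnorm M N A > 0"
proof -
  obtain w :: 'a where w: "w \<noteq> 0" using exists_nonzero by blast
  have "M w > 0" using isnD(1,2)[OF M, of w] w by auto
  moreover have "M w \<le> inv_opnorm M N A * N (A w)" by (rule inv_opnorm_le[OF assms])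
  moreover have "N (A w) \<ge> 0" using isnD(1)[OF N] by blast
  ultimately show ?thesis by (metis less_le_trans mult_nonpos_nonneg not_le)
qed


locale rcone =
  fixes K :: "'v::euclidean_space set"
  assumes RK: "regular_cone K"
begin

lemma K_closed: "closed K" and K_convex: "convex K" and K_cone: "cone K"
  and K_pointed: "K \<inter> uminus ` K \<subseteq> {0}" and K_int: "interior K \<noteq> {}"
  using RK unfolding regular_cone_def by auto

lemma K_scale: "k \<in> K \<Longrightarrow> c \<ge> 0 \<Longrightarrow> c *\<^sub>R k \<in> K"
  using K_cone unfolding cone_def by blast

lemma K_add: "x \<in> K \<Longrightarrow> y \<in> K \<Longrightarrow> x + y \<in> K"
  using convex_cone K_convex K_cone by blast

lemma K_zero: "0 \<in> K"
proof -
  obtain x where "x \<in> K" using K_int interior_subset by blast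
  then show ?thesis using K_scale[of x 0] by simp
qed

lemma K_pt: "x \<in> K \<Longrightarrow> - x \<in> K \<Longrightarrow> x = 0"
  using K_pointed by (metis IntI image_eqI minus_minus singletonD subsetD)

lemma K_sum: "finite S \<Longrightarrow> (\<And>i. i \<in> S \<Longrightarrow> f i \<in> K) \<Longrightarrow> sum f S \<in> K"
  by (induction S rule: finite_induct) (auto simp: K_zero K_add)

lemma K_ball: obtains p r where "r > 0" "ball p r \<subseteq> K"
  using K_int mem_interior by blast

lemma K_nonzero: obtains k where "k \<in> K" "k \<noteq> 0"
proof -
  obtain p r where pr: "r > 0" "ball p r \<subseteq> K" using K_ball by blast
  obtain e :: 'v where e: "e \<noteq> 0" using exists_nonzero by blast
  define q where "q = p + (r / 2 / norm e) *\<^sub>R e"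
  have "q \<in> ball p r" unfolding q_def using pr e by (simp add: dist_norm)
  then have "q \<in> K" "p \<in> K" using pr by auto
  moreover have "q \<noteq> p" unfolding q_def using pr e by simp
  ultimately show ?thesis using that by (cases "q = 0") auto
qed

lemma zero_notin_int: "0 \<notin> interior K"
proof
  assume "0 \<in> interior K"
  then obtain r where r: "r > 0" "ball 0 r \<subseteq> K" using mem_interior by blast
  obtain e :: 'v where e: "e \<noteq> 0" using exists_nonzero by blast
  define q where "q = (r / 2 / norm e) *\<^sub>R e"
  have "q \<in> ball 0 r" "-q \<in> ball 0 r" unfolding q_def using r e by auto
  then have "q = 0" using K_pt r by blast
  then show False unfolding q_def using r e by simp
qed

lemma dual_pos_int:
  assumes u: "u \<in> dual_cone K" "u \<noteq> 0" and p: "p \<in> interior K"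
  shows "u \<bullet> p > 0"
proof -
  obtain r where r: "r > 0" "ball p r \<subseteq> K" using p mem_interior by blast
  define q where "q = p - (r / 2 / norm u) *\<^sub>R u"
  have "q \<in> ball p r" unfolding q_def using r u by (simp add: dist_norm)
  then have "u \<bullet> q \<ge> 0" using u r unfolding dual_cone_def by (auto simp: inner_commute)
  moreover have "u \<bullet> q = u \<bullet> p - (r / 2 / norm u) * (u \<bullet> u)" unfolding q_def by (simp add: inner_diff_right)
  moreover have "(r / 2 / norm u) * (u \<bullet> u) > 0" using r u by simp
  ultimately show ?thesis by linarith
qed

lemma int_add:
  assumes k: "k \<in> K" and p: "p \<in> interior K" and c: "c > 0"
  shows "k + c *\<^sub>R p \<in> interior K"
proof -
  obtain r where r: "r > 0" "ball p r \<subseteq> K" using p mem_interior by blast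
  have "ball (k + c *\<^sub>R p) (c * r) \<subseteq> K"
  proof
    fix y assume y: "y \<in> ball (k + c *\<^sub>R p) (c * r)"
    define z where "z = (1 / c) *\<^sub>R (y - k)"
    have "dist p z < r"
    proof -
      have "p - z = (1/c) *\<^sub>R (k + c *\<^sub>R p - y)" unfolding z_def using c by (simp add: algebra_simps)
      then have "norm (p - z) = (1/c) * norm (k + c *\<^sub>R p - y)" using c by simp
      also have "\<dots> < (1/c) * (c * r)" using y c by (intro mult_strict_left_mono) (auto simp: dist_norm)
      finally show ?thesis using c by (simp add: dist_norm)
    qed
    then have "z \<in> K" using r by auto
    then have "c *\<^sub>R z \<in> K" using K_scale c by simp
    moreover have "y = k + c *\<^sub>R z" unfolding z_def using c by simp
    ultimately show "y \<in> K" using K_add k by simp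
  qed
  then show ?thesis using r c by (meson interior_maximal open_ball centre_in_ball mult_pos_pos subsetD)
qed

lemma int_dual_pos:
  assumes u: "u \<in> interior (dual_cone K)" and k: "k \<in> K" "k \<noteq> 0"
  shows "u \<bullet> k > 0"
proof -
  obtain r where r: "r > 0" "ball u r \<subseteq> dual_cone K" using u mem_interior by blast
  define q where "q = u - (r / 2 / norm k) *\<^sub>R k"
  have "q \<in> ball u r" unfolding q_def using r k by (simp add: dist_norm)
  then have "q \<bullet> k \<ge> 0" using r k unfolding dual_cone_def by auto
  moreover have "q \<bullet> k = u \<bullet> k - (r / 2 / norm k) * (k \<bullet> k)" unfolding q_def by (simp add: inner_diff_left)
  moreover have "(r / 2 / norm k) * (k \<bullet> k) > 0" using r k by simp
  ultimately show ?thesis by linarith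
qed

end


context rcone
begin

lemma dual_closed: "closed (dual_cone K)"
proof -
  have "dual_cone K = (\<Inter>x\<in>K. {u. inner x u \<ge> 0})" unfolding dual_cone_def by (auto simp: inner_commute)
  then show ?thesis using closed_halfspace_ge by (auto intro!: closed_INT)
qed

lemma hull_in_K: "convex hull (K \<inter> sphere 0 1) \<subseteq> K"
  by (intro hull_minimal K_convex) auto

lemma zero_notin_hull: "0 \<notin> convex hull (K \<inter> sphere 0 1)"
proof
  assume "0 \<in> convex hull (K \<inter> sphere 0 1)"
  then obtain S u where S: "finite S" "S \<subseteq> K \<inter> sphere 0 1" "\<forall>x\<in>S. 0 \<le> u x" "sum u S = 1"
     "(\<Sum>v\<in>S. u v *\<^sub>R v) = 0"
    unfolding convex_hull_explicit by blast
  obtain s where s: "s \<in> S" "u s > 0"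
  proof (rule ccontr)
    assume "\<not> thesis"
    then have "\<forall>x\<in>S. u x = 0" using that S(3) by force
    then have "sum u S = 0" by simp
    then show False using S(4) by simp
  qed
  have "(\<Sum>v\<in>S. u v *\<^sub>R v) = u s *\<^sub>R s + (\<Sum>v\<in>S - {s}. u v *\<^sub>R v)"
    using S(1) s(1) by (simp add: sum.remove)
  then have eq: "u s *\<^sub>R s = - (\<Sum>v\<in>S - {s}. u v *\<^sub>R v)" using S(5) by (simp add: eq_neg_iff_add_eq_0)
  have "(\<Sum>v\<in>S - {s}. u v *\<^sub>R v) \<in> K" using S by (intro K_sum K_scale) auto
  moreover have "u s *\<^sub>R s \<in> K" using S s by (intro K_scale) auto
  ultimately have "u s *\<^sub>R s = 0" using eq K_pt by (metis minus_minus)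
  then show False using s S(2) by auto
qed

end


context rcone
begin

lemma gordan:
  assumes R: "subspace R" "R \<inter> K \<subseteq> {0}"
  obtains u b where "b > 0" "\<And>r. r \<in> R \<Longrightarrow> u \<bullet> r = 0" "\<And>k. k \<in> K \<Longrightarrow> u \<bullet> k \<ge> b * norm k"
proof -
  define H where "H = convex hull (K \<inter> sphere 0 1)"
  define S where "S = (\<Union>x\<in>R. \<Union>y\<in>H. {x + y})"
  have "convex S" unfolding S_def H_def
    using convex_sums[OF subspace_imp_convex[OF R(1)] convex_convex_hull] by blast
  moreover have "closed S"
  proof -
    have "compact (K \<inter> sphere 0 1)" using closed_Int_compact[OF K_closed compact_sphere] by simp
    then have "compact H" unfolding H_def by (rule compact_convex_hull)
    then show ?thesis unfolding S_def using closed_compact_sums[OF closed_subspace[OF R(1)]] by blast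
  qed
  moreover have "0 \<notin> S"
  proof
    assume "0 \<in> S"
    then obtain x y where xy: "x \<in> R" "y \<in> H" "x + y = 0" unfolding S_def by auto
    then have "y = - x" by (simp add: eq_neg_iff_add_eq_0 add.commute)
    then have "y \<in> R" using xy R(1) subspace_neg by blast
    moreover have "y \<in> K" using xy hull_in_K H_def by blast
    ultimately have "y = 0" using R(2) by blast
    then show False using xy zero_notin_hull H_def by simp
  qed
  ultimately have "\<exists>a b. a \<noteq> 0 \<and> 0 < b \<and> (\<forall>x\<in>S. inner a x > b)"
    by (rule separating_hyperplane_closed_0)
  then obtain a b where ab: "a \<noteq> 0" "0 < b" "\<And>x. x \<in> S \<Longrightarrow> inner a x > b"
    by blast
  obtain k0 where k0: "k0 \<in> K" "k0 \<noteq> 0" using K_nonzero by blast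
  define h0 where "h0 = (1 / norm k0) *\<^sub>R k0"
  have "h0 \<in> K" unfolding h0_def using K_scale[OF k0(1)] by simp
  moreover have "norm h0 = 1" unfolding h0_def using k0 by simp
  ultimately have h0: "h0 \<in> H" unfolding H_def by (intro hull_inc) simp
  have orth: "a \<bullet> r = 0" if r: "r \<in> R" for r
  proof (rule ccontr)
    assume ne: "a \<bullet> r \<noteq> 0"
    define t where "t = - (\<bar>a \<bullet> h0\<bar> + b) / (a \<bullet> r)"
    have "t *\<^sub>R r \<in> R" using r R(1) subspace_scale by blast
    then have "t *\<^sub>R r + h0 \<in> S" unfolding S_def using h0 by blast
    then have "a \<bullet> (t *\<^sub>R r + h0) > b" using ab by blast
    moreover have "a \<bullet> (t *\<^sub>R r + h0) = - (\<bar>a \<bullet> h0\<bar> + b) + a \<bullet> h0"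
      unfolding t_def using ne by (simp add: inner_add_right)
    ultimately show False using abs_ge_self[of "a \<bullet> h0"] ab(2) by linarith
  qed
  have pos: "a \<bullet> k \<ge> b * norm k" if k: "k \<in> K" for k
  proof (cases "k = 0")
    case True then show ?thesis by simp
  next
    case False
    define h where "h = (1 / norm k) *\<^sub>R k"
    have "h \<in> K" unfolding h_def using K_scale[OF k] by simp
    moreover have "norm h = 1" unfolding h_def using False by simp
    ultimately have "h \<in> H" unfolding H_def by (intro hull_inc) simp
    then have "0 + h \<in> S" unfolding S_def using R(1) subspace_0 by blast
    then have "a \<bullet> h > b" using ab by simp
    then have "a \<bullet> k / norm k > b" unfolding h_def by simp
    then show ?thesis using False by (simp add: field_simps)
  qed
  show ?thesis using that[OF ab(2) orth pos] by blast
qed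

end


context rcone
begin

lemma weak_sep:
  assumes R: "subspace R" "R \<inter> interior K = {}"
  obtains u where "u \<in> dual_cone K" "u \<noteq> 0" "\<And>r. r \<in> R \<Longrightarrow> u \<bullet> r = 0"
proof -
  have "R \<noteq> {}" using R(1) subspace_0 by blast
  then obtain a b where ab: "a \<noteq> 0" "\<And>x. x \<in> R \<Longrightarrow> inner a x \<le> b" "\<And>x. x \<in> interior K \<Longrightarrow> inner a x \<ge> b"
    using separating_hyperplane_sets[of R "interior K"] R(2) subspace_imp_convex[OF R(1)] K_int
      convex_interior[OF K_convex] by blast
  have orth: "a \<bullet> r = 0" if r: "r \<in> R" for r
  proof (rule ccontr)
    assume ne: "a \<bullet> r \<noteq> 0"
    define t where "t = (\<bar>b\<bar> + 1) / (a \<bullet> r)"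
    have "t *\<^sub>R r \<in> R" using r R(1) subspace_scale by blast
    then have "a \<bullet> (t *\<^sub>R r) \<le> b" using ab by blast
    moreover have "a \<bullet> (t *\<^sub>R r) = \<bar>b\<bar> + 1" unfolding t_def using ne by simp
    ultimately show False using abs_ge_self[of b] by linarith
  qed
  have b0: "b \<ge> 0" using ab(2)[OF subspace_0[OF R(1)]] by simp
  have "interior K \<subseteq> {x. inner a x \<ge> 0}" using ab(3) b0 by force
  then have "closure (interior K) \<subseteq> {x. inner a x \<ge> 0}" by (intro closure_minimal closed_halfspace_ge)
  then have "K \<subseteq> {x. inner a x \<ge> 0}"
    using convex_closure_interior[OF K_convex K_int] K_closed closure_closed by metis
  then have "a \<in> dual_cone K" unfolding dual_cone_def by (auto simp: inner_commute)
  then show ?thesis using that ab(1) orth by blast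
qed

end


lemma is_norm_norm: "is_norm (norm :: 'a::real_normed_vector \<Rightarrow> real)"
  unfolding is_norm_def by (auto simp: norm_triangle_ineq)

lemma adjoint_zero_iff:
  fixes B :: "'w::euclidean_space \<Rightarrow> 'v::euclidean_space"
  assumes "linear B"
  shows "adjoint B u = 0 \<longleftrightarrow> (\<forall>w. u \<bullet> B w = 0)"
proof
  assume "adjoint B u = 0"
  then show "\<forall>w. u \<bullet> B w = 0" using adjoint_works[OF assms] by (metis inner_commute inner_zero_right)
next
  assume h: "\<forall>w. u \<bullet> B w = 0"
  have "adjoint B u \<bullet> adjoint B u = B (adjoint B u) \<bullet> u" using adjoint_works[OF assms] by simp
  also have "\<dots> = 0" using h by (simp add: inner_commute)
  finally show "adjoint B u = 0" by simp
qed

lemma opnorm_self: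
  fixes B :: "'w::euclidean_space \<Rightarrow> 'v::euclidean_space"
  assumes M: "is_norm M" and N: "is_norm N"
  shows "opnorm M N (\<lambda>w. B w - B w) = 0"
  unfolding opnorm_def using isn_0[OF N] isn_unit_ne[OF M] by simp

locale setting = rcone K
  for K :: "'v::euclidean_space set" +
  fixes nW :: "'w::euclidean_space \<Rightarrow> real" and n2 :: "'v \<Rightarrow> real"
  assumes nW: "is_norm nW" and n2: "is_norm n2"
begin

definition RP :: "('w \<Rightarrow> 'v) \<Rightarrow> bool" where
  "RP B \<longleftrightarrow> (\<exists>\<epsilon>>0. \<forall>A'. linear A' \<and> opnorm nW n2 (\<lambda>w. A' w - B w) < \<epsilon> \<longrightarrow> primal_feasible K A')"

definition RD :: "('w \<Rightarrow> 'v) \<Rightarrow> bool" where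
  "RD B \<longleftrightarrow> (\<exists>\<epsilon>>0. \<forall>A'. linear A' \<and> opnorm nW n2 (\<lambda>w. A' w - B w) < \<epsilon> \<longrightarrow> dual_feasible K A')"

lemma wp_iff: "well_posed nW n2 K B \<longleftrightarrow> RP B \<or> RD B"
  unfolding well_posed_def RP_def RD_def by blast

lemma ill_iff: "B \<in> ill_posed_set nW n2 K \<longleftrightarrow> linear B \<and> \<not> RP B \<and> \<not> RD B"
  unfolding ill_posed_set_def wp_iff by blast

lemma alt:
  assumes B: "linear B"
  shows "primal_feasible K B \<or> dual_feasible K B"
proof (rule ccontr)
  assume h: "\<not> (primal_feasible K B \<or> dual_feasible K B)"
  then have "range B \<inter> K \<subseteq> {0}" unfolding primal_feasible_def by auto
  then obtain b u where ub: "b > 0" "\<And>r. r \<in> range B \<Longrightarrow> u \<bullet> r = 0" "\<And>k. k \<in> K \<Longrightarrow> u \<bullet> k \<ge> b * norm k"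
    by (rule gordan[OF linear_subspace_image[OF B subspace_UNIV]]) blast
  obtain k0 where k0: "k0 \<in> K" "k0 \<noteq> 0" using K_nonzero by blast
  have "b * norm k0 > 0" using ub(1) k0(2) by simp
  then have "u \<bullet> k0 > 0" using ub(3)[OF k0(1)] by linarith
  then have "u \<noteq> 0" by auto
  moreover have "u \<in> dual_cone K" unfolding dual_cone_def mem_Collect_eq
  proof (safe)
    fix x assume "x \<in> K"
    have "b * norm x \<ge> 0" using ub(1) by simp
    then show "0 \<le> u \<bullet> x" using ub(3)[OF \<open>x \<in> K\<close>] by linarith
  qed
  moreover have "adjoint B u = 0" using adjoint_zero_iff[OF B] ub(2) by auto
  ultimately show False using h unfolding dual_feasible_def by blast
qed

lemma RP_pf: assumes "RP B" "linear B" shows "primal_feasible K B"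
proof -
  obtain e where e: "e > 0" "\<And>A'. linear A' \<and> opnorm nW n2 (\<lambda>w. A' w - B w) < e \<Longrightarrow> primal_feasible K A'"
    using assms(1) unfolding RP_def by blast
  show ?thesis using e(2)[of B] e(1) assms(2) opnorm_self[OF nW n2, of B] by simp
qed

lemma RD_df: assumes "RD B" "linear B" shows "dual_feasible K B"
proof -
  obtain e where e: "e > 0" "\<And>A'. linear A' \<and> opnorm nW n2 (\<lambda>w. A' w - B w) < e \<Longrightarrow> dual_feasible K A'"
    using assms(1) unfolding RD_def by blast
  show ?thesis using e(2)[of B] e(1) assms(2) opnorm_self[OF nW n2, of B] by simp
qed

end


context setting
begin

lemma RP_open:
  assumes B: "linear B" and P: "RP B"
  obtains d where "d > 0" "\<And>B'. linear B' \<Longrightarrow> opnorm nW n2 (\<lambda>w. B' w - B w) < d \<Longrightarrow> RP B'"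
proof -
  obtain e where e: "e > 0" "\<And>A'. linear A' \<and> opnorm nW n2 (\<lambda>w. A' w - B w) < e \<Longrightarrow> primal_feasible K A'"
    using P unfolding RP_def by blast
  have "RP B'" if B': "linear B'" "opnorm nW n2 (\<lambda>w. B' w - B w) < e / 2" for B'
    unfolding RP_def
  proof (intro exI[of _ "e/2"] conjI allI impI)
    show "e / 2 > 0" using e by simp
    fix A' assume A': "linear A' \<and> opnorm nW n2 (\<lambda>w. A' w - B' w) < e / 2"
    have "opnorm nW n2 (\<lambda>w. A' w - B w) \<le> opnorm nW n2 (\<lambda>w. A' w - B' w) + opnorm nW n2 (\<lambda>w. B' w - B w)"
      using opnorm_triangle[OF nW n2] A' B' B by blast
    then have "opnorm nW n2 (\<lambda>w. A' w - B w) < e" using A' B' by linarith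
    then show "primal_feasible K A'" using e(2) A' by blast
  qed
  then show ?thesis using that[of "e/2"] e(1) by simp
qed

lemma RD_open:
  assumes B: "linear B" and P: "RD B"
  obtains d where "d > 0" "\<And>B'. linear B' \<Longrightarrow> opnorm nW n2 (\<lambda>w. B' w - B w) < d \<Longrightarrow> RD B'"
proof -
  obtain e where e: "e > 0" "\<And>A'. linear A' \<and> opnorm nW n2 (\<lambda>w. A' w - B w) < e \<Longrightarrow> dual_feasible K A'"
    using P unfolding RD_def by blast
  have "RD B'" if B': "linear B'" "opnorm nW n2 (\<lambda>w. B' w - B w) < e / 2" for B'
    unfolding RD_def
  proof (intro exI[of _ "e/2"] conjI allI impI)
    show "e / 2 > 0" using e by simp
    fix A' assume A': "linear A' \<and> opnorm nW n2 (\<lambda>w. A' w - B' w) < e / 2"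
    have "opnorm nW n2 (\<lambda>w. A' w - B w) \<le> opnorm nW n2 (\<lambda>w. A' w - B' w) + opnorm nW n2 (\<lambda>w. B' w - B w)"
      using opnorm_triangle[OF nW n2] A' B' B by blast
    then have "opnorm nW n2 (\<lambda>w. A' w - B w) < e" using A' B' by linarith
    then show "dual_feasible K A'" using e(2) A' by blast
  qed
  then show ?thesis using that[of "e/2"] e(1) by simp
qed

lemma strict_pos: obtains e \<beta> where "\<beta> > 0" "\<And>k. k \<in> K \<Longrightarrow> e \<bullet> k \<ge> \<beta> * norm k"
proof -
  have s: "subspace {0::'v}" by (auto simp: subspace_def)
  have "{0::'v} \<inter> K \<subseteq> {0}" by simp
  then obtain b u where "b > 0" "\<And>k. k \<in> K \<Longrightarrow> u \<bullet> k \<ge> b * norm k"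
    by (rule gordan[OF s]) blast
  then show ?thesis using that by blast
qed

end


context setting
begin

lemma K_int_point: obtains p where "p \<in> interior K"
  using K_int by blast

lemma RP_not_df:
  assumes B: "linear B" and P: "RP B"
  shows "\<not> dual_feasible K B"
proof
  assume "dual_feasible K B"
  then obtain u where u: "u \<in> dual_cone K" "u \<noteq> 0" "adjoint B u = 0" unfolding dual_feasible_def by blast
  have uB: "u \<bullet> B w = 0" for w using u(3) adjoint_zero_iff[OF B] by blast
  obtain e \<beta> where eb: "\<beta> > 0" "\<And>k. k \<in> K \<Longrightarrow> e \<bullet> k \<ge> \<beta> * norm k" by (rule strict_pos) blast
  obtain \<epsilon> where ep: "\<epsilon> > 0" "\<And>A'. linear A' \<and> opnorm nW n2 (\<lambda>w. A' w - B w) < \<epsilon> \<Longrightarrow> primal_feasible K A'"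
    using P unfolding RP_def by blast
  obtain p where p: "p \<in> interior K" by (rule K_int_point)
  have pK: "p \<in> K" using p interior_subset by blast
  have c0: "u \<bullet> p > 0" using dual_pos_int[OF u(1,2) p] .
  have ep0: "e \<bullet> p \<ge> 0" using eb(2)[OF pK] eb(1) by (smt (verit) mult_nonneg_nonneg norm_ge_zero)
  obtain D where D: "D > 0" "\<And>w. norm (B w) \<le> D * nW w" using lin_norm_bound[OF nW is_norm_norm B] by blast
  define Q where "Q = norm e * D * n2 p"
  have Q0: "Q \<ge> 0" unfolding Q_def using D(1) isnD(1)[OF n2] by simp
  define s where "s = \<epsilon> * (u \<bullet> p) / (2 * (Q + 1))"
  have s0: "s > 0" unfolding s_def using ep(1) c0 Q0 by simp
  define den where "den = u \<bullet> p + s * (e \<bullet> p)"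
  have den: "den \<ge> u \<bullet> p" "den > 0" unfolding den_def using s0 ep0 c0 by (auto intro!: add_pos_nonneg)
  define B' where "B' = (\<lambda>w. B w - ((s * (e \<bullet> B w)) / den) *\<^sub>R p)"
  have linB': "linear B'" unfolding B'_def
  proof (rule linearI)
    fix x y show "B (x + y) - (s * (e \<bullet> B (x + y)) / den) *\<^sub>R p =
        B x - (s * (e \<bullet> B x) / den) *\<^sub>R p + (B y - (s * (e \<bullet> B y) / den) *\<^sub>R p)"
      by (simp add: linear_add[OF B] inner_add_right algebra_simps add_divide_distrib scaleR_add_left)
  next
    fix c x show "B (c *\<^sub>R x) - (s * (e \<bullet> B (c *\<^sub>R x)) / den) *\<^sub>R p =
        c *\<^sub>R (B x - (s * (e \<bullet> B x) / den) *\<^sub>R p)"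
      by (simp add: linear_scale[OF B] algebra_simps)
  qed
  have bound: "n2 (B' w - B w) \<le> (s * Q / (u \<bullet> p)) * nW w" for w
  proof -
    have "n2 (B' w - B w) = \<bar>s * (e \<bullet> B w) / den\<bar> * n2 p"
      unfolding B'_def using isnD(3)[OF n2, of "- (s * (e \<bullet> B w) / den)" p] by simp
    also have "\<bar>s * (e \<bullet> B w) / den\<bar> = s * \<bar>e \<bullet> B w\<bar> / den" using s0 den by (simp add: abs_mult)
    also have "\<dots> \<le> s * \<bar>e \<bullet> B w\<bar> / (u \<bullet> p)"
      using den c0 s0 by (intro divide_left_mono) auto
    also have "\<dots> \<le> s * (norm e * (D * nW w)) / (u \<bullet> p)"
    proof -
      have "\<bar>e \<bullet> B w\<bar> \<le> norm e * norm (B w)" by (rule Cauchy_Schwarz_ineq2)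
      also have "\<dots> \<le> norm e * (D * nW w)" using D(2) by (intro mult_left_mono) auto
      finally show ?thesis using s0 c0 by (intro divide_right_mono mult_left_mono) auto
    qed
    finally have "n2 (B' w - B w) \<le> s * (norm e * (D * nW w)) / (u \<bullet> p) * n2 p"
      using isnD(1)[OF n2, of p] by (simp add: mult_right_mono)
    then show ?thesis unfolding Q_def by (simp add: field_simps)
  qed
  have "s * (Q + 1) = \<epsilon> * (u \<bullet> p) / 2"
  proof -
    have "Q + 1 \<noteq> 0" using Q0 by simp
    then show ?thesis unfolding s_def by (simp add: divide_simps)
  qed
  moreover have "s * Q \<le> s * (Q + 1)" using s0 by simp
  ultimately have "s * Q < \<epsilon> * (u \<bullet> p)" using mult_pos_pos[OF ep(1) c0] by linarith
  then have lt: "s * Q / (u \<bullet> p) < \<epsilon>" using c0 by (simp add: divide_less_eq)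
  have "opnorm nW n2 (\<lambda>w. B' w - B w) \<le> s * Q / (u \<bullet> p)"
    by (rule opnorm_leI[OF nW]) (rule bound)
  then have "primal_feasible K B'" using ep(2) linB' lt by simp
  then obtain w where w: "B' w \<in> K" "B' w \<noteq> 0" unfolding primal_feasible_def by blast
  have "(u + s *\<^sub>R e) \<bullet> B' w = 0"
  proof -
    have "(u + s *\<^sub>R e) \<bullet> B' w = u \<bullet> B w + s * (e \<bullet> B w) - (s * (e \<bullet> B w) / den) * den"
      unfolding B'_def den_def by (simp add: inner_diff_right inner_add_left algebra_simps)
    also have "\<dots> = 0" using uB den(2) by simp
    finally show ?thesis .
  qed
  moreover have "(u + s *\<^sub>R e) \<bullet> B' w > 0"
  proof -
    have "u \<bullet> B' w \<ge> 0" using u(1) w(1) unfolding dual_cone_def by blast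
    moreover have "e \<bullet> B' w \<ge> \<beta> * norm (B' w)" using eb(2)[OF w(1)] .
    moreover have "\<beta> * norm (B' w) > 0" using eb(1) w(2) by simp
    ultimately have "s * (e \<bullet> B' w) > 0" using s0 by simp
    then show ?thesis using \<open>u \<bullet> B' w \<ge> 0\<close> by (simp add: inner_add_left)
  qed
  ultimately show False by simp
qed

end


context setting
begin

lemma Kpt_not_RD:
  assumes B: "linear B" and w0: "w0 \<noteq> 0" "B w0 \<in> K"
  shows "\<not> RD B"
proof
  assume "RD B"
  then obtain \<epsilon> where ep: "\<epsilon> > 0" "\<And>A'. linear A' \<and> opnorm nW n2 (\<lambda>w. A' w - B w) < \<epsilon> \<Longrightarrow> dual_feasible K A'"
    unfolding RD_def by blast
  obtain p where p: "p \<in> interior K" by (rule K_int_point)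
  obtain D where D: "D > 0" "\<And>w. norm (id w) \<le> D * nW w" using lin_norm_bound[OF nW is_norm_norm linear_id] by blast
  define Q where "Q = D * n2 p / norm w0"
  have Q0: "Q \<ge> 0" unfolding Q_def using D(1) isnD(1)[OF n2] by simp
  define s where "s = \<epsilon> / (2 * (Q + 1))"
  have s0: "s > 0" unfolding s_def using ep(1) Q0 by simp
  define B' where "B' = (\<lambda>w. B w + (s * (w \<bullet> w0) / (w0 \<bullet> w0)) *\<^sub>R p)"
  have linB': "linear B'" unfolding B'_def
  proof (rule linearI)
    fix x y show "B (x + y) + (s * ((x + y) \<bullet> w0) / (w0 \<bullet> w0)) *\<^sub>R p =
        B x + (s * (x \<bullet> w0) / (w0 \<bullet> w0)) *\<^sub>R p + (B y + (s * (y \<bullet> w0) / (w0 \<bullet> w0)) *\<^sub>R p)"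
      by (simp add: linear_add[OF B] inner_add_left algebra_simps add_divide_distrib scaleR_add_left)
  next
    fix c x show "B (c *\<^sub>R x) + (s * ((c *\<^sub>R x) \<bullet> w0) / (w0 \<bullet> w0)) *\<^sub>R p =
        c *\<^sub>R (B x + (s * (x \<bullet> w0) / (w0 \<bullet> w0)) *\<^sub>R p)"
      by (simp add: linear_scale[OF B] algebra_simps)
  qed
  have nw0: "norm w0 > 0" using w0 by simp
  have bound: "n2 (B' w - B w) \<le> (s * Q) * nW w" for w
  proof -
    have "n2 (B' w - B w) = \<bar>s * (w \<bullet> w0) / (w0 \<bullet> w0)\<bar> * n2 p"
      unfolding B'_def using isnD(3)[OF n2] by simp
    also have "\<bar>s * (w \<bullet> w0) / (w0 \<bullet> w0)\<bar> = s * \<bar>w \<bullet> w0\<bar> / (norm w0 * norm w0)"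
      using s0 by (simp add: abs_mult power2_norm_eq_inner[symmetric] power2_eq_square)
    also have "\<dots> \<le> s * (norm w * norm w0) / (norm w0 * norm w0)"
      using s0 nw0 Cauchy_Schwarz_ineq2[of w w0] by (intro divide_right_mono mult_left_mono) auto
    also have "\<dots> = s * norm w / norm w0" using nw0 by simp
    also have "\<dots> \<le> s * (D * nW w) / norm w0" using D(2)[of w] s0 nw0
      by (intro divide_right_mono mult_left_mono) auto
    finally have "n2 (B' w - B w) \<le> s * (D * nW w) / norm w0 * n2 p"
      using isnD(1)[OF n2, of p] by (simp add: mult_right_mono)
    then show ?thesis unfolding Q_def by (simp add: field_simps)
  qed
  have "s * (Q + 1) = \<epsilon> / 2"
  proof -
    have "Q + 1 \<noteq> 0" using Q0 by simp
    then show ?thesis unfolding s_def by (simp add: divide_simps)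
  qed
  moreover have "s * Q \<le> s * (Q + 1)" using s0 by simp
  ultimately have lt: "s * Q < \<epsilon>" using ep(1) by linarith
  have "opnorm nW n2 (\<lambda>w. B' w - B w) \<le> s * Q"
    by (rule opnorm_leI[OF nW]) (rule bound)
  then have "dual_feasible K B'" using ep(2) linB' lt by simp
  then obtain u where u: "u \<in> dual_cone K" "u \<noteq> 0" "adjoint B' u = 0" unfolding dual_feasible_def by blast
  have "u \<bullet> B' w0 = 0" using u(3) adjoint_zero_iff[OF linB'] by blast
  moreover have "B' w0 \<in> interior K"
  proof -
    have "B' w0 = B w0 + s *\<^sub>R p" unfolding B'_def using w0 by simp
    then show ?thesis using int_add[OF w0(2) p s0] by simp
  qed
  then have "u \<bullet> B' w0 > 0" using dual_pos_int[OF u(1,2)] by blast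
  ultimately show False by simp
qed

lemma RD_not_pf:
  assumes B: "linear B" and D: "RD B"
  shows "\<not> primal_feasible K B"
proof
  assume "primal_feasible K B"
  then obtain w where w: "B w \<in> K" "B w \<noteq> 0" unfolding primal_feasible_def by blast
  then have "w \<noteq> 0" using linear_0[OF B] by auto
  then show False using Kpt_not_RD[OF B _ w(1)] D by blast
qed

lemma RP_not_RD:
  assumes B: "linear B" and P: "RP B"
  shows "\<not> RD B"
  using RP_not_df[OF B P] RD_df[OF _ B] by blast

lemma int_RP:
  assumes B: "linear B" and w0: "B w0 \<in> interior K"
  shows "RP B"
proof -
  obtain r where r: "r > 0" "ball (B w0) r \<subseteq> interior K"
    using w0 open_interior open_contains_ball by blast
  obtain c where c: "c > 0" "\<And>x. c * norm x \<le> n2 x" using isn_lower[OF n2] by blast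
  define \<delta> where "\<delta> = r * c / (nW w0 + 1)"
  have d0: "\<delta> > 0" unfolding \<delta>_def using r c isnD(1)[OF nW, of w0] by (simp add: add_nonneg_pos)
  have "primal_feasible K A'" if A': "linear A'" "opnorm nW n2 (\<lambda>w. A' w - B w) < \<delta>" for A'
  proof -
    have "n2 (A' w0 - B w0) \<le> opnorm nW n2 (\<lambda>w. A' w - B w) * nW w0"
      using opnorm_le[OF nW n2 linear_compose_sub[OF A'(1) B]] by simp
    also have "\<dots> \<le> \<delta> * nW w0" using A'(2) isnD(1)[OF nW, of w0] by (simp add: mult_right_mono)
    also have "\<dots> < r * c"
    proof -
      have "\<delta> * nW w0 = r * c * (nW w0 / (nW w0 + 1))" unfolding \<delta>_def by simp
      also have "nW w0 / (nW w0 + 1) < 1" using isnD(1)[OF nW, of w0] by simp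
      then have "r * c * (nW w0 / (nW w0 + 1)) < r * c * 1" using r c by (intro mult_strict_left_mono) auto
      finally show ?thesis by simp
    qed
    finally have "c * norm (A' w0 - B w0) < c * r" using c(2)[of "A' w0 - B w0"] by (simp add: mult.commute)
    then have "norm (A' w0 - B w0) < r" using c(1) by simp
    then have "A' w0 \<in> interior K" using r(2) by (auto simp: dist_norm norm_minus_commute)
    moreover have "A' w0 \<noteq> 0" using calculation zero_notin_int by auto
    ultimately show ?thesis unfolding primal_feasible_def using interior_subset by blast
  qed
  then show ?thesis unfolding RP_def using d0 by blast
qed

end


context setting
begin

lemma inj_RD:
  assumes B: "linear B" "inj B" and RK0: "range B \<inter> K \<subseteq> {0}"
  shows "RD B"
proof -
  obtain b u where ub: "b > 0" "\<And>r. r \<in> range B \<Longrightarrow> u \<bullet> r = 0" "\<And>k. k \<in> K \<Longrightarrow> u \<bullet> k \<ge> b * norm k"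
    using RK0 by (rule gordan[OF linear_subspace_image[OF B(1) subspace_UNIV]]) blast
  obtain \<beta> where be: "\<beta> > 0" "\<And>x. \<beta> * norm x \<le> norm (B x)" using linear_inj_bounded_below_pos[OF B] by blast
  obtain c where c: "c > 0" "\<And>x. c * norm x \<le> n2 x" using isn_lower[OF n2] by blast
  obtain C where C: "C > 0" "\<And>x. nW x \<le> C * norm x" using isn_upper[OF nW] by blast
  define \<eta> where "\<eta> = b * \<beta> / (2 * (b + norm u))"
  have eta0: "\<eta> > 0" unfolding \<eta>_def using ub(1) be(1) by (simp add: add_pos_nonneg)
  define \<delta> where "\<delta> = \<eta> * c / C"
  have d0: "\<delta> > 0" unfolding \<delta>_def using eta0 c C by simp
  have "dual_feasible K A'" if A': "linear A'" "opnorm nW n2 (\<lambda>w. A' w - B w) < \<delta>" for A'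
  proof -
    have "\<not> primal_feasible K A'"
    proof
      assume "primal_feasible K A'"
      then obtain w where w: "A' w \<in> K" "A' w \<noteq> 0" unfolding primal_feasible_def by blast
      have nw: "norm w > 0" using w(2) linear_0[OF A'(1)] by auto
      define d where "d = A' w - B w"
      have "c * norm d \<le> n2 d" by (rule c(2))
      also have "\<dots> \<le> opnorm nW n2 (\<lambda>w. A' w - B w) * nW w"
        unfolding d_def using opnorm_le[OF nW n2 linear_compose_sub[OF A'(1) B(1)]] by simp
      also have "\<dots> \<le> \<delta> * (C * norm w)"
        using A'(2) C(2)[of w] isnD(1)[OF nW, of w] opnorm_nonneg[OF nW n2 linear_compose_sub[OF A'(1) B(1)]]
        by (intro mult_mono) auto
      also have "\<dots> = c * (\<eta> * norm w)" unfolding \<delta>_def using C(1) by simp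
      finally have dn: "norm d \<le> \<eta> * norm w" using c(1) by simp
      have "b * norm (A' w) \<le> u \<bullet> A' w" using ub(3)[OF w(1)] .
      also have "u \<bullet> A' w = u \<bullet> d" unfolding d_def using ub(2)[of "B w"] by (simp add: inner_diff_right)
      also have "\<dots> \<le> norm u * norm d" by (rule norm_cauchy_schwarz)
      finally have i1: "b * norm (A' w) \<le> norm u * norm d" .
      have "norm (B w) \<le> norm (A' w) + norm d" unfolding d_def by (metis norm_triangle_sub add.commute norm_minus_commute)
      then have "\<beta> * norm w \<le> norm (A' w) + norm d" using be(2)[of w] by linarith
      then have "b * (\<beta> * norm w) \<le> b * norm (A' w) + b * norm d" using ub(1)
        by (metis distrib_left mult_le_cancel_left_pos)
      also have "\<dots> \<le> (norm u + b) * norm d" using i1 by (simp add: algebra_simps)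
      also have "\<dots> \<le> (norm u + b) * (\<eta> * norm w)" using dn ub(1) by (intro mult_left_mono) auto
      also have "\<dots> = b * \<beta> * norm w / 2"
      proof -
        have "norm u + b \<noteq> 0" using ub(1) by (metis add_pos_nonneg norm_ge_zero add.commute less_irrefl)
        then show ?thesis unfolding \<eta>_def by (simp add: field_simps)
      qed
      finally have "b * \<beta> * norm w \<le> b * \<beta> * norm w / 2" by (simp add: mult.assoc)
      moreover have "b * \<beta> * norm w > 0" using ub(1) be(1) nw by simp
      ultimately show False by linarith
    qed
    then show ?thesis using alt[OF A'(1)] by blast
  qed
  then show ?thesis unfolding RD_def using d0 by blast
qed

lemma zero_ill: "(\<lambda>w. 0 :: 'v) \<in> ill_posed_set nW n2 K"
proof -
  have lin: "linear (\<lambda>w. 0 :: 'v)" by (rule linear_zero)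
  have "\<not> primal_feasible K (\<lambda>w. 0 :: 'v)" unfolding primal_feasible_def by simp
  then have "\<not> RP (\<lambda>w. 0 :: 'v)" using RP_pf[OF _ lin] by blast
  moreover obtain w0 :: 'w where "w0 \<noteq> 0" using exists_nonzero by blast
  then have "\<not> RD (\<lambda>w. 0 :: 'v)" using Kpt_not_RD[OF lin] K_zero by blast
  ultimately show ?thesis unfolding ill_iff using lin by blast
qed

definition pth :: "('w \<Rightarrow> 'v) \<Rightarrow> ('w \<Rightarrow> 'v) \<Rightarrow> real \<Rightarrow> 'w \<Rightarrow> 'v" where
  "pth A0 A1 t = (\<lambda>w. A0 w + t *\<^sub>R (A1 w - A0 w))"

lemma pth_linear: "linear A0 \<Longrightarrow> linear A1 \<Longrightarrow> linear (pth A0 A1 t)"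
  unfolding pth_def
proof (rule linearI)
  fix x y
  assume "linear A0" "linear A1"
  then show "A0 (x + y) + t *\<^sub>R (A1 (x + y) - A0 (x + y)) = A0 x + t *\<^sub>R (A1 x - A0 x) + (A0 y + t *\<^sub>R (A1 y - A0 y))"
    by (simp add: linear_add algebra_simps)
next
  fix c x
  assume "linear A0" "linear A1"
  then show "A0 (c *\<^sub>R x) + t *\<^sub>R (A1 (c *\<^sub>R x) - A0 (c *\<^sub>R x)) = c *\<^sub>R (A0 x + t *\<^sub>R (A1 x - A0 x))"
    by (simp add: linear_scale algebra_simps)
qed

lemma pth_dist:
  assumes A: "linear A0" "linear A1"
  shows "opnorm nW n2 (\<lambda>w. pth A0 A1 s w - pth A0 A1 t w) \<le> \<bar>s - t\<bar> * opnorm nW n2 (\<lambda>w. A1 w - A0 w)"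
proof (rule opnorm_leI[OF nW])
  fix w
  have "pth A0 A1 s w - pth A0 A1 t w = (s - t) *\<^sub>R (A1 w - A0 w)" unfolding pth_def by (simp add: algebra_simps)
  then have "n2 (pth A0 A1 s w - pth A0 A1 t w) = \<bar>s - t\<bar> * n2 (A1 w - A0 w)" using isnD(3)[OF n2] by simp
  also have "\<dots> \<le> \<bar>s - t\<bar> * (opnorm nW n2 (\<lambda>w. A1 w - A0 w) * nW w)"
    using opnorm_le[OF nW n2 linear_compose_sub[OF A(2,1)]] by (intro mult_left_mono) auto
  finally show "n2 (pth A0 A1 s w - pth A0 A1 t w) \<le> \<bar>s - t\<bar> * opnorm nW n2 (\<lambda>w. A1 w - A0 w) * nW w"
    by (simp add: mult.assoc)
qed

lemma pth_open:
  assumes A: "linear A0" "linear A1"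
    and Q: "\<And>B. linear B \<Longrightarrow> Q B \<Longrightarrow> \<exists>d>0. \<forall>B'. linear B' \<and> opnorm nW n2 (\<lambda>w. B' w - B w) < d \<longrightarrow> Q B'"
  shows "open {t. Q (pth A0 A1 t)}"
  unfolding open_dist
proof (intro ballI)
  fix t assume "t \<in> {t. Q (pth A0 A1 t)}"
  then obtain d where d: "d > 0" "\<And>B'. linear B' \<and> opnorm nW n2 (\<lambda>w. B' w - pth A0 A1 t w) < d \<Longrightarrow> Q B'"
    using Q[OF pth_linear[OF A]] by blast
  define Om where "Om = opnorm nW n2 (\<lambda>w. A1 w - A0 w)"
  have O0: "Om \<ge> 0" unfolding Om_def using opnorm_nonneg[OF nW n2 linear_compose_sub[OF A(2,1)]] .
  show "\<exists>e>0. \<forall>y. dist y t < e \<longrightarrow> y \<in> {t. Q (pth A0 A1 t)}"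
  proof (intro exI[of _ "d / (Om + 1)"] conjI allI impI)
    show "d / (Om + 1) > 0" using d O0 by simp
    fix y assume "dist y t < d / (Om + 1)"
    then have "\<bar>y - t\<bar> * (Om + 1) < d" using O0 by (simp add: dist_real_def field_simps)
    moreover have "\<bar>y - t\<bar> * Om \<le> \<bar>y - t\<bar> * (Om + 1)" by (simp add: mult_left_mono)
    ultimately have "\<bar>y - t\<bar> * Om < d" by linarith
    then have "opnorm nW n2 (\<lambda>w. pth A0 A1 y w - pth A0 A1 t w) < d"
      using pth_dist[OF A, of y t] unfolding Om_def by linarith
    then show "y \<in> {t. Q (pth A0 A1 t)}" using d(2) pth_linear[OF A] by blast
  qed
qed

lemma path_ill:
  assumes A: "linear A0" "linear A1"
    and h: "(RP A0 \<and> \<not> RP A1) \<or> (RD A0 \<and> \<not> RD A1)"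
  obtains t where "t \<in> {0..1}" "pth A0 A1 t \<in> ill_posed_set nW n2 K"
proof -
  have "\<exists>t\<in>{0..1}. pth A0 A1 t \<in> ill_posed_set nW n2 K"
  proof (rule ccontr)
  assume nt: "\<not> (\<exists>t\<in>{0..1}. pth A0 A1 t \<in> ill_posed_set nW n2 K)"
  have ni: "pth A0 A1 t \<notin> ill_posed_set nW n2 K" if "t \<in> {0..1}" for t
    using nt that by blast
  have all: "RP (pth A0 A1 t) \<or> RD (pth A0 A1 t)" if "t \<in> {0..1}" for t
    using ni[OF that] ill_iff pth_linear[OF A] by blast
  have oP: "open {t. RP (pth A0 A1 t)}"
  proof (rule pth_open[OF A])
    fix B :: "'w \<Rightarrow> 'v" assume "linear B" "RP B"
    then obtain d where "d > 0" "\<And>B'. linear B' \<Longrightarrow> opnorm nW n2 (\<lambda>w. B' w - B w) < d \<Longrightarrow> RP B'"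
      by (rule RP_open) blast
    then show "\<exists>d>0. \<forall>B'. linear B' \<and> opnorm nW n2 (\<lambda>w. B' w - B w) < d \<longrightarrow> RP B'" by blast
  qed
  have oD: "open {t. RD (pth A0 A1 t)}"
  proof (rule pth_open[OF A])
    fix B :: "'w \<Rightarrow> 'v" assume "linear B" "RD B"
    then obtain d where "d > 0" "\<And>B'. linear B' \<Longrightarrow> opnorm nW n2 (\<lambda>w. B' w - B w) < d \<Longrightarrow> RD B'"
      by (rule RD_open) blast
    then show "\<exists>d>0. \<forall>B'. linear B' \<and> opnorm nW n2 (\<lambda>w. B' w - B w) < d \<longrightarrow> RD B'" by blast
  qed
  have disj: "{t. RP (pth A0 A1 t)} \<inter> {t. RD (pth A0 A1 t)} \<inter> {0..1} = {}"
    using RP_not_RD pth_linear[OF A] by blast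
  have cov: "{0..1} \<subseteq> {t. RP (pth A0 A1 t)} \<union> {t. RD (pth A0 A1 t)}" using all by blast
  have p0: "pth A0 A1 0 = A0" and p1: "pth A0 A1 1 = A1" unfolding pth_def by auto
  have "{t. RP (pth A0 A1 t)} \<inter> {0..1::real} = {} \<or> {t. RD (pth A0 A1 t)} \<inter> {0..1} = {}"
    by (rule connectedD[OF connected_Icc oP oD disj cov])
  then show False
  proof
    assume e: "{t. RP (pth A0 A1 t)} \<inter> {0..1::real} = {}"
    show False
    proof (cases "RP A0 \<and> \<not> RP A1")
      case True
      then have "(0::real) \<in> {t. RP (pth A0 A1 t)} \<inter> {0..1}" using p0 by simp
      then show False using e by blast
    next
      case False
      then have "RD A0" "\<not> RD A1" using h by auto
      then have "\<not> RP A0" using RP_not_RD A by blast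
      moreover have "RP A1" using all[of 1] p1 \<open>\<not> RD A1\<close> by simp
      ultimately have "(1::real) \<in> {t. RP (pth A0 A1 t)} \<inter> {0..1}" using p1 by simp
      then show False using e by blast
    qed
  next
    assume e: "{t. RD (pth A0 A1 t)} \<inter> {0..1::real} = {}"
    show False
    proof (cases "RD A0 \<and> \<not> RD A1")
      case True
      then have "(0::real) \<in> {t. RD (pth A0 A1 t)} \<inter> {0..1}" using p0 by simp
      then show False using e by blast
    next
      case False
      then have "RP A0" "\<not> RP A1" using h by auto
      moreover have "RD A1" using all[of 1] p1 \<open>\<not> RP A1\<close> by simp
      ultimately have "(1::real) \<in> {t. RD (pth A0 A1 t)} \<inter> {0..1}" using p1 by simp
      then show False using e by blast
    qed
  qed
qed
  then show ?thesis using that by blast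
qed

end


lemma extend_subspace_aux:
  fixes S T :: "'a::euclidean_space set"
  assumes "subspace S" "subspace T" "S \<subseteq> T" "dim S + n \<le> dim T"
  shows "\<exists>L. subspace L \<and> S \<subseteq> L \<and> L \<subseteq> T \<and> dim L = dim S + n"
  using assms
proof (induction n arbitrary: S)
  case 0 then show ?case by (intro exI[of _ S]) simp
next
  case (Suc n)
  have "\<not> T \<subseteq> S"
  proof
    assume "T \<subseteq> S"
    then have "dim T \<le> dim S" by (rule dim_subset)
    then show False using Suc.prems(4) by simp
  qed
  then obtain t where t: "t \<in> T" "t \<notin> S" by blast
  define S' where "S' = span (insert t S)"
  have sS': "subspace S'" unfolding S'_def by simp
  have "S \<subseteq> S'" unfolding S'_def using span_superset by blast
  have "S' \<subseteq> T" unfolding S'_def using t Suc.prems(2,3) by (intro span_minimal) auto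
  have "span S = S" using Suc.prems(1) by (rule span_eq_iff[THEN iffD2])
  then have "t \<notin> span S" using t(2) by metis
  then have dS': "dim S' = dim S + 1" unfolding S'_def by (simp add: dim_insert)
  have "dim S' + n \<le> dim T" using Suc.prems(4) dS' by simp
  then have "\<exists>L. subspace L \<and> S' \<subseteq> L \<and> L \<subseteq> T \<and> dim L = dim S' + n"
    by (rule Suc.IH[OF sS' Suc.prems(2) \<open>S' \<subseteq> T\<close>])
  then obtain L where L: "subspace L" "S' \<subseteq> L" "L \<subseteq> T" "dim L = dim S' + n" by blast
  have "S \<subseteq> L" using \<open>S \<subseteq> S'\<close> L(2) by (rule subset_trans)
  moreover have "dim L = dim S + Suc n" using L(4) dS' by simp
  ultimately show ?case using L(1,3) by blast
qed

lemma extend_subspace: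
  fixes S T :: "'a::euclidean_space set"
  assumes "subspace S" "subspace T" "S \<subseteq> T" "dim S \<le> m" "m \<le> dim T"
  obtains L where "subspace L" "S \<subseteq> L" "L \<subseteq> T" "dim L = m"
proof -
  have "dim S + (m - dim S) \<le> dim T" using assms(4,5) by simp
  then have "\<exists>L. subspace L \<and> S \<subseteq> L \<and> L \<subseteq> T \<and> dim L = dim S + (m - dim S)"
    by (rule extend_subspace_aux[OF assms(1-3)])
  then obtain L where L: "subspace L" "S \<subseteq> L" "L \<subseteq> T" "dim L = dim S + (m - dim S)" by blast
  have "dim L = m" using L(4) assms(4) by simp
  then show ?thesis using that L(1-3) by blast
qed

lemma dim_hyperplane:
  fixes u :: "'a::euclidean_space"
  assumes "u \<noteq> 0"
  shows "dim {x. u \<bullet> x = 0} + 1 = DIM('a)"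
proof -
  have "dim {y \<in> UNIV. \<forall>x \<in> span {u}. orthogonal x y} + dim (span {u}) = dim (UNIV :: 'a set)"
    by (rule dim_subspace_orthogonal_to_vectors) auto
  moreover have "{y \<in> UNIV. \<forall>x \<in> span {u}. orthogonal x y} = {x. u \<bullet> x = 0}"
    by (auto simp: span_singleton orthogonal_def)
  ultimately show ?thesis using assms by simp
qed

lemma subspace_hyperplane: "subspace {x. u \<bullet> x = 0}"
  by (auto simp: subspace_def inner_add_right)

lemma dim_orth_comp:
  fixes R :: "'a::euclidean_space set"
  assumes "subspace R"
  shows "dim (orthogonal_comp R) + dim R = DIM('a)"
proof -
  have "dim {y \<in> UNIV. \<forall>x \<in> R. orthogonal x y} + dim R = dim (UNIV :: 'a set)"
    by (rule dim_subspace_orthogonal_to_vectors) (use assms in auto)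
  moreover have "{y \<in> UNIV. \<forall>x \<in> R. orthogonal x y} = orthogonal_comp R"
    by (auto simp: orthogonal_comp_def orthogonal_def inner_commute)
  ultimately show ?thesis by simp
qed

context setting
begin

lemma mkSigma:
  assumes R: "subspace R" and u: "u \<in> dual_cone K" "u \<noteq> 0" and k: "k \<in> K" "k \<noteq> 0"
    and uk: "u \<bullet> k = 0" and uR: "\<And>r. r \<in> R \<Longrightarrow> u \<bullet> r = 0"
    and dm: "dim (insert k R) \<le> m" and mV: "m < DIM('v)"
  obtains L' where "L' \<in> Sigma_m K m" "R \<subseteq> L'"
proof -
  define S where "S = span (insert k R)"
  define T where "T = {x. u \<bullet> x = 0}"
  have sT: "subspace T" unfolding T_def by (rule subspace_hyperplane)
  have sS: "subspace S" unfolding S_def by (rule subspace_span)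
  have ST: "S \<subseteq> T" unfolding S_def T_def using uk uR subspace_hyperplane
    by (intro span_minimal) auto
  have dS: "dim S \<le> m" unfolding S_def using dm by simp
  have dT: "m \<le> dim T" using dim_hyperplane[OF u(2)] mV unfolding T_def by simp
  obtain L where L: "subspace L" "S \<subseteq> L" "L \<subseteq> T" "dim L = m"
    by (rule extend_subspace[OF sS sT ST dS dT]) blast
  have kL: "k \<in> L" using L(2) span_superset unfolding S_def by blast
  have RL: "R \<subseteq> L" using L(2) span_superset unfolding S_def by blast
  have "u \<in> orthogonal_comp L" using L(3) unfolding T_def orthogonal_comp_def orthogonal_def
    by (auto simp: inner_commute)
  then have "orthogonal_comp L \<inter> dual_cone K \<noteq> {0}" using u by blast
  moreover have "L \<inter> K \<noteq> {0}" using kL k by blast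
  ultimately have "L \<in> Sigma_m K m" unfolding Sigma_m_def Gr_def using L by simp
  then show ?thesis using that RL by blast
qed

end


lemma noninj_dim:
  fixes B :: "'w::euclidean_space \<Rightarrow> 'v::euclidean_space"
  assumes B: "linear B" and ni: "\<not> inj B"
  shows "dim (range B) < DIM('w)"
proof -
  obtain z where z: "B z = 0" "z \<noteq> 0" using ni linear_injective_0[OF B] by blast
  define H where "H = {x. z \<bullet> x = 0}"
  have "range B \<subseteq> B ` H"
  proof
    fix y assume "y \<in> range B"
    then obtain x where x: "y = B x" by blast
    define c where "c = (x \<bullet> z) / (z \<bullet> z)"
    have "z \<bullet> (x - c *\<^sub>R z) = 0" unfolding c_def using z(2) by (simp add: inner_diff_right inner_commute)
    moreover have "B (x - c *\<^sub>R z) = y" using x z(1) linear_diff[OF B] linear_scale[OF B] by simp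
    ultimately show "y \<in> B ` H" unfolding H_def by (metis (mono_tags) image_eqI mem_Collect_eq)
  qed
  then have "dim (range B) \<le> dim (B ` H)" by (rule dim_subset)
  also have "\<dots> \<le> dim H" by (rule dim_image_le[OF B])
  finally show ?thesis using dim_hyperplane[OF z(2)] unfolding H_def by simp
qed

context setting
begin

lemma boundary_pair:
  assumes R: "subspace R" "R \<inter> K \<subseteq> {0}" "dim R + 2 \<le> DIM('v)"
  obtains u k where "u \<in> dual_cone K" "u \<noteq> 0" "k \<in> K" "k \<noteq> 0" "u \<bullet> k = 0" "\<And>r. r \<in> R \<Longrightarrow> u \<bullet> r = 0"
proof -
  obtain b u0 where ub: "b > 0" "\<And>r. r \<in> R \<Longrightarrow> u0 \<bullet> r = 0" "\<And>k. k \<in> K \<Longrightarrow> u0 \<bullet> k \<ge> b * norm k"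
    using R(2) by (rule gordan[OF R(1)]) blast
  define P where "P = orthogonal_comp R"
  have dP: "dim P \<ge> 2" using dim_orth_comp[OF R(1)] R(3) unfolding P_def by simp
  have u0P: "u0 \<in> P" unfolding P_def orthogonal_comp_def orthogonal_def using ub(2) by (simp add: inner_commute)
  have "\<not> P \<subseteq> span {u0}"
  proof
    assume "P \<subseteq> span {u0}"
    then have "dim P \<le> dim (span {u0})" by (rule dim_subset)
    also have "\<dots> \<le> 1" by simp
    finally show False using dP by simp
  qed
  then obtain z where z: "z \<in> P" "z \<notin> span {u0}" by blast
  define C where "C = K \<inter> sphere 0 1"
  have cC: "compact C" unfolding C_def using closed_Int_compact[OF K_closed compact_sphere] .
  obtain k0 where k0: "k0 \<in> K" "k0 \<noteq> 0" using K_nonzero by blast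
  have "(1 / norm k0) *\<^sub>R k0 \<in> C" unfolding C_def using K_scale[OF k0(1)] k0(2) by simp
  then have neC: "C \<noteq> {}" by blast
  have pos: "u0 \<bullet> k \<ge> b" if "k \<in> C" for k using ub(3)[of k] that unfolding C_def by simp
  define f where "f = (\<lambda>k. (z \<bullet> k) / (u0 \<bullet> k))"
  have "continuous_on C f" unfolding f_def
    using pos ub(1) by (intro continuous_intros) force
  then obtain ks where ks: "ks \<in> C" "\<And>y. y \<in> C \<Longrightarrow> f ks \<le> f y"
    using continuous_attains_inf[OF cC neC] by blast
  define lam where "lam = f ks"
  define u where "u = z - lam *\<^sub>R u0"
  have uks0: "u0 \<bullet> ks > 0" using pos[OF ks(1)] ub(1) by simp
  have "u \<bullet> ks = 0" unfolding u_def lam_def f_def using uks0 by (simp add: inner_diff_left)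
  moreover have ksK: "ks \<in> K" "ks \<noteq> 0" using ks(1) unfolding C_def by auto
  moreover have "u \<in> dual_cone K" unfolding dual_cone_def mem_Collect_eq
  proof
    fix k assume k: "k \<in> K"
    show "0 \<le> u \<bullet> k"
    proof (cases "k = 0")
      case True then show ?thesis by simp
    next
      case False
      define k' where "k' = (1 / norm k) *\<^sub>R k"
      have k'C: "k' \<in> C" unfolding C_def k'_def using K_scale[OF k] False by simp
      have p': "u0 \<bullet> k' > 0" using pos[OF k'C] ub(1) by simp
      have "lam \<le> (z \<bullet> k') / (u0 \<bullet> k')" using ks(2)[OF k'C] unfolding lam_def f_def by simp
      then have "lam * (u0 \<bullet> k') \<le> z \<bullet> k'" using p' by (simp add: le_divide_eq)
      then have "u \<bullet> k' \<ge> 0" unfolding u_def by (simp add: inner_diff_left)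
      then show ?thesis unfolding k'_def using False by (simp add: zero_le_divide_iff)
    qed
  qed
  moreover have "u \<noteq> 0"
  proof
    assume "u = 0"
    then have "z = lam *\<^sub>R u0" unfolding u_def by simp
    then have "z \<in> span {u0}" by (simp add: span_base span_scale)
    then show False using z(2) by simp
  qed
  moreover have "u \<bullet> r = 0" if "r \<in> R" for r
  proof -
    have "z \<bullet> r = 0" using z(1) that unfolding P_def orthogonal_comp_def orthogonal_def by (simp add: inner_commute)
    then show ?thesis unfolding u_def using ub(2)[OF that] by (simp add: inner_diff_left)
  qed
  ultimately show ?thesis using that by blast
qed

lemma sigma_ne:
  assumes "1 \<le> m" "m < DIM('v)"
  shows "Sigma_m K m \<noteq> {}"
proof -
  have s0: "subspace {0::'v}" by (auto simp: subspace_def)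
  obtain u k where uk: "u \<in> dual_cone K" "u \<noteq> 0" "k \<in> K" "k \<noteq> 0" "u \<bullet> k = 0" "\<And>r. r \<in> {0} \<Longrightarrow> u \<bullet> r = 0"
    by (rule boundary_pair[OF s0]) (use assms in auto)
  have dm: "dim (insert k {0::'v}) \<le> m" using assms uk(4) by (simp add: dim_insert)
  obtain L' where "L' \<in> Sigma_m K m" "{0} \<subseteq> L'"
    using mkSigma[OF s0 uk(1) uk(2) uk(3) uk(4) uk(5) uk(6) dm assms(2)] by blast
  then show ?thesis by blast
qed

end


context setting
begin

lemma ill_sigma:
  assumes B: "B \<in> ill_posed_set nW n2 K" and mW: "DIM('w) = m" "m < DIM('v)"
  obtains L' where "L' \<in> Sigma_m K m" "range B \<subseteq> L'"
proof -
  have lin: "linear B" and nP: "\<not> RP B" and nD: "\<not> RD B" using B ill_iff by auto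
  define R where "R = range B"
  have sR: "subspace R" unfolding R_def by (rule linear_subspace_image[OF lin subspace_UNIV])
  have dR: "dim R \<le> m"
  proof -
    have "dim R \<le> dim (UNIV :: 'w set)" unfolding R_def by (rule dim_image_le[OF lin])
    then show ?thesis using mW(1) by simp
  qed
  have noint: "R \<inter> interior K = {}"
  proof (rule ccontr)
    assume "R \<inter> interior K \<noteq> {}"
    then obtain w0 where "B w0 \<in> interior K" unfolding R_def by blast
    then show False using int_RP[OF lin] nP by blast
  qed
  show ?thesis
  proof (cases "\<exists>k\<in>R. k \<in> K \<and> k \<noteq> 0")
    case True
    then obtain k where k: "k \<in> R" "k \<in> K" "k \<noteq> 0" by blast
    obtain u where u: "u \<in> dual_cone K" "u \<noteq> 0" "\<And>r. r \<in> R \<Longrightarrow> u \<bullet> r = 0"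
      by (rule weak_sep[OF sR noint]) blast
    have uk: "u \<bullet> k = 0" using u(3)[OF k(1)] .
    have "k \<in> span R" using k(1) span_superset by blast
    then have dm: "dim (insert k R) \<le> m" using dR by (simp add: dim_insert)
    obtain L' where "L' \<in> Sigma_m K m" "R \<subseteq> L'"
      using mkSigma[OF sR u(1) u(2) k(2) k(3) uk u(3) dm mW(2)] by blast
    then show ?thesis using that unfolding R_def by blast
  next
    case False
    then have RK: "R \<inter> K \<subseteq> {0}" by blast
    have "\<not> inj B"
    proof
      assume "inj B"
      then have "RD B" using inj_RD[OF lin] RK unfolding R_def by blast
      then show False using nD by blast
    qed
    then have "dim R < m" using noninj_dim[OF lin] mW(1) unfolding R_def by simp
    then have d2: "dim R + 2 \<le> DIM('v)" using mW(2) by simp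
    obtain u k where uk: "u \<in> dual_cone K" "u \<noteq> 0" "k \<in> K" "k \<noteq> 0" "u \<bullet> k = 0" "\<And>r. r \<in> R \<Longrightarrow> u \<bullet> r = 0"
      by (rule boundary_pair[OF sR RK d2]) blast
    have dm: "dim (insert k R) \<le> m" using \<open>dim R < m\<close> by (simp add: dim_insert)
    obtain L' where "L' \<in> Sigma_m K m" "R \<subseteq> L'"
      using mkSigma[OF sR uk(1) uk(2) uk(3) uk(4) uk(5) uk(6) dm mW(2)] by blast
    then show ?thesis using that unfolding R_def by blast
  qed
qed

end


lemma isn_equiv:
  fixes N1 N2 :: "'a::euclidean_space \<Rightarrow> real"
  assumes "is_norm N1" "is_norm N2"
  obtains C where "C > 0" "\<And>x. N2 x \<le> C * N1 x"
proof -
  obtain D where "D > 0" "\<And>x. N2 (id x) \<le> D * N1 x" using lin_norm_bound[OF assms(1,2) linear_id] by blast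
  then show ?thesis using that by simp
qed

context
  fixes n1 n2 :: "'v::euclidean_space \<Rightarrow> real"
  assumes n1: "is_norm n1" and n2: "is_norm n2"
begin

lemma bddb_dist: "bdd_below ((\<lambda>v. n2 (x - v) / n1 x) ` L)"
  using isnD(1)[OF n1] isnD(1)[OF n2] by (intro bdd_belowI[of _ 0]) auto

lemma bddb_distbar: "bdd_below ((\<lambda>v. n2 (x - v) / n1 v) ` L)"
  using isnD(1)[OF n1] isnD(1)[OF n2] by (intro bdd_belowI[of _ 0]) auto

lemma inner_dist_le:
  assumes "v \<in> L2" "n2 (x - v) / n1 x \<le> c"
  shows "(INF v\<in>L2. n2 (x - v) / n1 x) \<le> c"
  by (rule cINF_lower2[OF bddb_dist assms])

lemma inner_dist_ge0:
  assumes "L2 \<noteq> {}" shows "(INF v\<in>L2. n2 (x - v) / n1 x) \<ge> 0"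
  using assms isnD(1)[OF n1] isnD(1)[OF n2] by (intro cINF_greatest) auto

lemma inner_distbar_ge0:
  assumes "L2 \<noteq> {}" shows "(INF v\<in>L2. n2 (x - v) / n1 v) \<ge> 0"
  using assms isnD(1)[OF n1] isnD(1)[OF n2] by (intro cINF_greatest) auto

lemma bdda_dist:
  assumes "0 \<in> L2"
  shows "bdd_above ((\<lambda>x. INF v\<in>L2. n2 (x - v) / n1 x) ` (L1 - {0}))"
proof -
  obtain C where C: "C > 0" "\<And>x. n2 x \<le> C * n1 x" using isn_equiv[OF n1 n2] by blast
  have "(INF v\<in>L2. n2 (x - v) / n1 x) \<le> C" if "x \<in> L1 - {0}" for x
  proof (rule inner_dist_le[OF assms])
    have "n1 x > 0" using that isnD(1,2)[OF n1, of x] by auto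
    then show "n2 (x - 0) / n1 x \<le> C" using C(2)[of x] by (simp add: divide_le_eq)
  qed
  then show ?thesis by (intro bdd_aboveI[of _ C]) auto
qed

lemma dist_ge_inner:
  assumes "0 \<in> L2" "x \<in> L1" "x \<noteq> 0"
  shows "(INF v\<in>L2. n2 (x - v) / n1 x) \<le> subsp_dist n1 n2 L1 L2"
  unfolding subsp_dist_def using assms by (intro cSUP_upper bdda_dist) auto

lemma dist_nonneg:
  assumes "0 \<in> L2" "x \<in> L1" "x \<noteq> 0"
  shows "subsp_dist n1 n2 L1 L2 \<ge> 0"
  using dist_ge_inner[OF assms] inner_dist_ge0[of L2 x] assms(1) by force

lemma dist_leI:
  assumes "L1 - {0} \<noteq> {}" "\<And>x. x \<in> L1 \<Longrightarrow> x \<noteq> 0 \<Longrightarrow> \<exists>v\<in>L2. n2 (x - v) / n1 x \<le> c"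
  shows "subsp_dist n1 n2 L1 L2 \<le> c"
  unfolding subsp_dist_def
proof (rule cSUP_least[OF assms(1)])
  fix x assume "x \<in> L1 - {0}"
  then obtain v where "v \<in> L2" "n2 (x - v) / n1 x \<le> c" using assms(2) by blast
  then show "(INF v\<in>L2. n2 (x - v) / n1 x) \<le> c" by (rule inner_dist_le)
qed

lemma bdda_distbar:
  assumes v0: "v0 \<in> L2" "v0 \<noteq> 0" and sub: "\<And>c. c *\<^sub>R v0 \<in> L2"
  shows "bdd_above ((\<lambda>x. INF v\<in>L2 - {0}. n2 (x - v) / n1 v) ` (L1 - {0}))"
proof -
  obtain C where C: "C > 0" "\<And>x. n2 x \<le> C * n1 x" using isn_equiv[OF n1 n2] by blast
  have nv0: "n1 v0 > 0" using isnD(1,2)[OF n1, of v0] v0(2) by auto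
  define M where "M = C / n1 v0 + n2 v0 / n1 v0"
  have "(INF v\<in>L2 - {0}. n2 (x - v) / n1 v) \<le> M" if x: "x \<in> L1 - {0}" for x
  proof -
    have nx: "n1 x > 0" using x isnD(1,2)[OF n1, of x] by auto
    define v where "v = n1 x *\<^sub>R v0"
    have vin: "v \<in> L2 - {0}" unfolding v_def using sub nx v0(2) by simp
    have "n1 v = n1 x * n1 v0" unfolding v_def using isnD(3)[OF n1] nx by simp
    moreover have "n2 (x - v) \<le> n2 x + n1 x * n2 v0"
      unfolding v_def using isn_triangle_diff[OF n2, of x "n1 x *\<^sub>R v0"] isnD(3)[OF n2] nx by simp
    ultimately have "n2 (x - v) / n1 v \<le> (n2 x + n1 x * n2 v0) / (n1 x * n1 v0)"
      using nx nv0 by (simp add: divide_right_mono)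
    also have "\<dots> = n2 x / (n1 x * n1 v0) + n2 v0 / n1 v0" using nx by (simp add: add_divide_distrib)
    also have "\<dots> \<le> M" unfolding M_def using C(2)[of x] nx nv0 by (simp add: divide_le_eq field_simps)
    finally show ?thesis by (intro cINF_lower2[OF bddb_distbar vin])
  qed
  then show ?thesis by (intro bdd_aboveI[of _ M]) auto
qed

lemma distbar_ge_inner:
  assumes v0: "v0 \<in> L2" "v0 \<noteq> 0" and sub: "\<And>c. c *\<^sub>R v0 \<in> L2" and x: "x \<in> L1" "x \<noteq> 0"
  shows "(INF v\<in>L2 - {0}. n2 (x - v) / n1 v) \<le> subsp_distbar n1 n2 L1 L2"
  unfolding subsp_distbar_def using x by (intro cSUP_upper bdda_distbar[OF v0 sub]) auto

lemma distbar_nonneg: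
  assumes v0: "v0 \<in> L2" "v0 \<noteq> 0" and sub: "\<And>c. c *\<^sub>R v0 \<in> L2" and x: "x \<in> L1" "x \<noteq> 0"
  shows "subsp_distbar n1 n2 L1 L2 \<ge> 0"
  using distbar_ge_inner[OF assms] inner_distbar_ge0[of "L2 - {0}" x] v0 by force

lemma distbar_leI:
  assumes "L1 - {0} \<noteq> {}" "\<And>x. x \<in> L1 \<Longrightarrow> x \<noteq> 0 \<Longrightarrow> (INF v\<in>L2 - {0}. n2 (x - v) / n1 v) \<le> c"
  shows "subsp_distbar n1 n2 L1 L2 \<le> c"
  unfolding subsp_distbar_def using assms by (intro cSUP_least) auto

end

lemma HB:
  fixes M :: "'a::euclidean_space \<Rightarrow> real"
  assumes M: "is_norm M" and w: "w \<noteq> 0" and g: "\<gamma> > 0"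
  obtains a where "a \<bullet> w = 1" "\<And>z. \<bar>a \<bullet> z\<bar> \<le> (1 + \<gamma>) * M z / M w"
proof -
  define S where "S = {x. M x \<le> 1}"
  have Mw: "M w > 0" using isnD(1,2)[OF M, of w] w by auto
  have cS: "closed S" unfolding S_def using isn_continuous[OF M, of UNIV]
    by (simp add: closed_Collect_le continuous_on_const)
  have cvS: "convex S" unfolding S_def convex_def
  proof (safe)
    fix x y :: 'a and u v :: real assume h: "M x \<le> 1" "M y \<le> 1" "0 \<le> u" "0 \<le> v" "u + v = 1"
    have "M (u *\<^sub>R x + v *\<^sub>R y) \<le> M (u *\<^sub>R x) + M (v *\<^sub>R y)" by (rule isnD(4)[OF M])
    also have "\<dots> = u * M x + v * M y" using isnD(3)[OF M] h by simp
    also have "\<dots> \<le> u * 1 + v * 1" using h by (intro add_mono mult_left_mono) auto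
    finally show "M (u *\<^sub>R x + v *\<^sub>R y) \<le> 1" using h by simp
  qed
  define p where "p = ((1 + \<gamma>) / M w) *\<^sub>R w"
  have Mp: "M p = 1 + \<gamma>" unfolding p_def using isnD(3)[OF M] Mw g by simp
  then have "p \<notin> S" unfolding S_def using g by simp
  then obtain a b where ab: "inner a p < b" "\<And>x. x \<in> S \<Longrightarrow> inner a x > b"
    using separating_hyperplane_closed_point[OF cvS cS] by blast
  have "0 \<in> S" unfolding S_def using isn_0[OF M] by simp
  then have b0: "b < 0" using ab(2) by fastforce
  define c where "c = - b"
  have c0: "c > 0" unfolding c_def using b0 by simp
  have bound: "\<bar>a \<bullet> z\<bar> \<le> c * M z" for z
  proof (cases "z = 0")
    case True then show ?thesis by (simp add: isn_0[OF M])
  next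
    case False
    then have Mz: "M z > 0" using isnD(1,2)[OF M, of z] by auto
    have "(1 / M z) *\<^sub>R z \<in> S" unfolding S_def using isnD(3)[OF M] Mz by auto
    moreover have "M ((- 1 / M z) *\<^sub>R z) = 1" using isnD(3)[OF M, of "- 1 / M z" z] Mz by simp
    then have "(- 1 / M z) *\<^sub>R z \<in> S" unfolding S_def by simp
    ultimately have "(1 / M z) *\<^sub>R z \<in> S" "(- 1 / M z) *\<^sub>R z \<in> S" by auto
    then have "a \<bullet> ((1 / M z) *\<^sub>R z) > b" "a \<bullet> ((- 1 / M z) *\<^sub>R z) > b" using ab(2) by blast+
    then have "(a \<bullet> z) / M z > - c" "- (a \<bullet> z) / M z > - c" unfolding c_def by auto
    then have "a \<bullet> z > - c * M z" "- (a \<bullet> z) > - c * M z" using Mz by (auto simp: field_simps)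
    then show ?thesis by linarith
  qed
  have "a \<bullet> p < - c" using ab(1) unfolding c_def by simp
  then have awn: "(1 + \<gamma>) / M w * (a \<bullet> w) < - c" unfolding p_def by simp
  define aw where "aw = - (a \<bullet> w)"
  have "aw * (1 + \<gamma>) / M w = - ((1 + \<gamma>) / M w * (a \<bullet> w))" unfolding aw_def by simp
  then have aw: "aw * (1 + \<gamma>) / M w > c" using awn by linarith
  then have aw0: "aw > 0" using c0 Mw g by (smt (verit) divide_nonpos_pos mult_nonpos_nonneg)
  define a' where "a' = (- 1 / aw) *\<^sub>R a"
  have "a' \<bullet> w = 1" unfolding a'_def aw_def using aw0 aw_def by (simp add: field_simps)
  moreover have "\<bar>a' \<bullet> z\<bar> \<le> (1 + \<gamma>) * M z / M w" for z
  proof -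
    have "\<bar>a' \<bullet> z\<bar> = \<bar>a \<bullet> z\<bar> / aw" unfolding a'_def using aw0 by (simp add: abs_mult)
    also have "\<dots> \<le> c * M z / aw" using bound[of z] aw0 by (simp add: divide_right_mono)
    also have "\<dots> \<le> (1 + \<gamma>) * M z / M w"
    proof -
      have "c * M w \<le> aw * (1 + \<gamma>)" using aw Mw by (simp add: field_simps)
      then have "c * M z * M w \<le> (1 + \<gamma>) * M z * aw" using isnD(1)[OF M, of z]
        by (metis mult.commute mult.left_commute mult_left_mono)
      then show ?thesis using aw0 Mw by (simp add: field_simps)
    qed
    finally show ?thesis .
  qed
  ultimately show ?thesis using that by blast
qed


context setting
begin

lemma pth_from:
  assumes A: "linear A0" "linear A1"
  shows "opnorm nW n2 (\<lambda>w. A0 w - pth A0 A1 t w) \<le> \<bar>t\<bar> * opnorm nW n2 (\<lambda>w. A1 w - A0 w)"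
proof (rule opnorm_leI[OF nW])
  fix w
  have e: "A0 w - pth A0 A1 t w = (- t) *\<^sub>R (A1 w - A0 w)" unfolding pth_def by (simp add: algebra_simps)
  have "n2 (A0 w - pth A0 A1 t w) = n2 ((- t) *\<^sub>R (A1 w - A0 w))" unfolding e ..
  also have "\<dots> = \<bar>- t\<bar> * n2 (A1 w - A0 w)" by (rule isnD(3)[OF n2])
  finally have "n2 (A0 w - pth A0 A1 t w) = \<bar>t\<bar> * n2 (A1 w - A0 w)" by simp
  also have "\<dots> \<le> \<bar>t\<bar> * (opnorm nW n2 (\<lambda>w. A1 w - A0 w) * nW w)"
    using opnorm_le[OF nW n2 linear_compose_sub[OF A(2,1)]] by (intro mult_left_mono) auto
  finally show "n2 (A0 w - pth A0 A1 t w) \<le> \<bar>t\<bar> * opnorm nW n2 (\<lambda>w. A1 w - A0 w) * nW w"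
    by (simp add: mult.assoc)
qed

lemma Rd_le:
  assumes A: "linear A" and B: "B \<in> ill_posed_set nW n2 K"
  shows "Rdist nW n2 K A \<le> opnorm nW n2 (\<lambda>w. A w - B w)"
  unfolding Rdist_def
proof (rule cINF_lower[OF _ B])
  show "bdd_below ((\<lambda>A'. opnorm nW n2 (\<lambda>w. A w - A' w)) ` ill_posed_set nW n2 K)"
    using opnorm_nonneg[OF nW n2 linear_compose_sub[OF A]] unfolding ill_posed_set_def
    by (intro bdd_belowI[of _ 0]) auto
qed

lemma Rd_le_path:
  assumes A0: "linear A0" and A1: "linear A1" and t: "t \<in> {0..1}" and ill: "pth A0 A1 t \<in> ill_posed_set nW n2 K"
  shows "Rdist nW n2 K A0 \<le> opnorm nW n2 (\<lambda>w. A1 w - A0 w)"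
proof -
  have "Rdist nW n2 K A0 \<le> opnorm nW n2 (\<lambda>w. A0 w - pth A0 A1 t w)" by (rule Rd_le[OF A0 ill])
  also have "\<dots> \<le> \<bar>t\<bar> * opnorm nW n2 (\<lambda>w. A1 w - A0 w)" by (rule pth_from[OF A0 A1])
  also have "\<dots> \<le> 1 * opnorm nW n2 (\<lambda>w. A1 w - A0 w)"
    using t opnorm_nonneg[OF nW n2 linear_compose_sub[OF A1 A0]] by (intro mult_right_mono) auto
  finally show ?thesis by simp
qed

lemma Rd_pos:
  assumes A: "linear A" and wp: "A \<notin> ill_posed_set nW n2 K"
  shows "Rdist nW n2 K A > 0"
proof -
  have "RP A \<or> RD A" using wp A ill_iff by blast
  then obtain d where d: "d > 0" "\<And>B'. linear B' \<Longrightarrow> opnorm nW n2 (\<lambda>w. B' w - A w) < d \<Longrightarrow> RP B' \<or> RD B'"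
  proof
    assume "RP A"
    then obtain d where "d > 0" "\<And>B'. linear B' \<Longrightarrow> opnorm nW n2 (\<lambda>w. B' w - A w) < d \<Longrightarrow> RP B'"
      by (rule RP_open[OF A]) blast
    then show ?thesis using that by blast
  next
    assume "RD A"
    then obtain d where "d > 0" "\<And>B'. linear B' \<Longrightarrow> opnorm nW n2 (\<lambda>w. B' w - A w) < d \<Longrightarrow> RD B'"
      by (rule RD_open[OF A]) blast
    then show ?thesis using that by blast
  qed
  have "d \<le> Rdist nW n2 K A" unfolding Rdist_def
  proof (rule cINF_greatest)
    show "ill_posed_set nW n2 K \<noteq> {}" using zero_ill by blast
  next
    fix B assume B: "B \<in> ill_posed_set nW n2 K"
    then have lB: "linear B" and nB: "\<not> RP B" "\<not> RD B" using ill_iff by auto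
    have "\<not> opnorm nW n2 (\<lambda>w. B w - A w) < d" using d(2)[OF lB] nB by blast
    then show "d \<le> opnorm nW n2 (\<lambda>w. A w - B w)" using opnorm_commute[OF n2, of nW B A] by simp
  qed
  then show ?thesis using d(1) by simp
qed

lemma sigma_facts:
  assumes "L' \<in> Sigma_m K m"
  obtains u where "subspace L'" "dim L' = m" "u \<in> dual_cone K" "u \<noteq> 0" "\<And>v. v \<in> L' \<Longrightarrow> u \<bullet> v = 0"
    "L' \<inter> K \<noteq> {0}"
proof -
  have h: "subspace L'" "dim L' = m" "L' \<inter> K \<noteq> {0}" "orthogonal_comp L' \<inter> dual_cone K \<noteq> {0}"
    using assms unfolding Sigma_m_def Gr_def by auto
  have "0 \<in> orthogonal_comp L'" by (simp add: orthogonal_comp_def orthogonal_def)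
  moreover have "0 \<in> dual_cone K" by (simp add: dual_cone_def)
  ultimately obtain u where u: "u \<in> orthogonal_comp L'" "u \<in> dual_cone K" "u \<noteq> 0" using h(4) by blast
  have "u \<bullet> v = 0" if "v \<in> L'" for v
  proof -
    have "orthogonal v u" using u(1) that unfolding orthogonal_comp_def by blast
    then show ?thesis by (simp add: orthogonal_def inner_commute)
  qed
  then show ?thesis using that h u by blast
qed

end


context setting
begin

lemma part_a1:
  assumes n1: "is_norm n1" and A: "linear A" and RPA: "RP A" and L': "L' \<in> Sigma_m K m"
  shows "Rdist nW n2 K A \<le> opnorm nW n1 A * subsp_dist n1 n2 (range A) L'"
proof -
  obtain u where sL': "subspace L'" and u: "u \<in> dual_cone K" "u \<noteq> 0" and uv: "\<And>v. v \<in> L' \<Longrightarrow> u \<bullet> v = 0"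
    by (rule sigma_facts[OF L']) blast
  have z: "0 \<in> L'" using sL' subspace_0 by blast
  define \<delta> where "\<delta> = subsp_dist n1 n2 (range A) L'"
  define NA where "NA = opnorm nW n1 A"
  obtain w1 where w1: "A w1 \<in> K" "A w1 \<noteq> 0" using RP_pf[OF RPA A] unfolding primal_feasible_def by blast
  have d0: "\<delta> \<ge> 0" unfolding \<delta>_def using dist_nonneg[OF n1 n2 z _ w1(2)] by simp
  have NA0: "NA \<ge> 0" unfolding NA_def by (rule opnorm_nonneg[OF nW n1 A])
  obtain c2 where c2: "c2 > 0" "\<And>x. c2 * norm x \<le> n2 x" using isn_lower[OF n2] by blast
  define H where "H = {y. u \<bullet> y = 1}"
  define \<eta> where "\<eta> = (INF y\<in>H. n2 y)"
  have Hne: "H \<noteq> {}"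
  proof -
    have "u \<bullet> ((1 / (u \<bullet> u)) *\<^sub>R u) = 1" using u(2) by simp
    then show ?thesis unfolding H_def by blast
  qed
  have bddH: "bdd_below (n2 ` H)" using isnD(1)[OF n2] by (intro bdd_belowI[of _ 0]) auto
  have eta_pos: "\<eta> > 0"
  proof -
    have "c2 / norm u \<le> \<eta>" unfolding \<eta>_def
    proof (rule cINF_greatest[OF Hne])
      fix y assume "y \<in> H"
      then have "1 \<le> norm u * norm y" unfolding H_def using norm_cauchy_schwarz[of u y] by simp
      also have "\<dots> \<le> norm u * (n2 y / c2)" using c2 by (intro mult_left_mono) (auto simp: field_simps)
      finally show "c2 / norm u \<le> n2 y" using c2(1) u(2) by (simp add: field_simps)
    qed
    moreover have "c2 / norm u > 0" using c2(1) u(2) by simp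
    ultimately show ?thesis by linarith
  qed
  have key: "\<eta> * \<bar>u \<bullet> x\<bar> \<le> \<delta> * n1 x" if x: "x \<in> range A" for x
  proof (cases "x = 0")
    case True then show ?thesis by (simp add: isn_0[OF n1])
  next
    case False
    have nx: "n1 x > 0" using isnD(1,2)[OF n1, of x] False by auto
    have each: "\<eta> * \<bar>u \<bullet> x\<bar> \<le> n2 (x - v)" if v: "v \<in> L'" for v
    proof (cases "u \<bullet> x = 0")
      case True then show ?thesis using isnD(1)[OF n2] by simp
    next
      case False
      define y where "y = (1 / (u \<bullet> x)) *\<^sub>R (x - v)"
      have "u \<bullet> y = 1" unfolding y_def using uv[OF v] False by (simp add: inner_diff_right)
      then have "y \<in> H" unfolding H_def by simp
      then have "\<eta> \<le> n2 y" unfolding \<eta>_def by (rule cINF_lower[OF bddH])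
      also have "n2 y = n2 (x - v) / \<bar>u \<bullet> x\<bar>" unfolding y_def using isnD(3)[OF n2] by simp
      finally show ?thesis using False by (simp add: field_simps)
    qed
    have "\<eta> * \<bar>u \<bullet> x\<bar> / n1 x \<le> (INF v\<in>L'. n2 (x - v) / n1 x)"
      using z each nx by (intro cINF_greatest) (auto simp: divide_right_mono)
    also have "\<dots> \<le> \<delta>" unfolding \<delta>_def using dist_ge_inner[OF n1 n2 z x False] .
    finally show ?thesis using nx by (simp add: divide_le_eq)
  qed
  show ?thesis
  proof (rule field_le_epsilon)
    fix e :: real assume e: "e > 0"
    define \<gamma> where "\<gamma> = e * \<eta> / (NA * \<delta> + 1)"
    have NAd: "NA * \<delta> \<ge> 0" using NA0 d0 by simp
    have g0: "\<gamma> > 0" unfolding \<gamma>_def using e eta_pos NAd by simp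
    have "\<eta> < \<eta> + \<gamma>" using g0 by simp
    then obtain y where y: "y \<in> H" "n2 y < \<eta> + \<gamma>"
      unfolding \<eta>_def using cINF_less_iff[OF Hne bddH] by blast
    define A' where "A' = (\<lambda>w. A w - (u \<bullet> A w) *\<^sub>R y)"
    have linA': "linear A'" unfolding A'_def
    proof (rule linearI)
      fix a b show "A (a + b) - (u \<bullet> A (a + b)) *\<^sub>R y = A a - (u \<bullet> A a) *\<^sub>R y + (A b - (u \<bullet> A b) *\<^sub>R y)"
        by (simp add: linear_add[OF A] inner_add_right algebra_simps scaleR_add_left)
    next
      fix c a show "A (c *\<^sub>R a) - (u \<bullet> A (c *\<^sub>R a)) *\<^sub>R y = c *\<^sub>R (A a - (u \<bullet> A a) *\<^sub>R y)"
        by (simp add: linear_scale[OF A] algebra_simps)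
    qed
    have "u \<bullet> A' w = 0" for w
      unfolding A'_def using y(1) unfolding H_def by (simp add: inner_diff_right)
    then have "adjoint A' u = 0" using adjoint_zero_iff[OF linA'] by blast
    then have "dual_feasible K A'" unfolding dual_feasible_def using u by blast
    then have "\<not> RP A'" using RP_not_df[OF linA'] by blast
    then have h: "(RP A \<and> \<not> RP A') \<or> (RD A \<and> \<not> RD A')" using RPA by blast
    obtain t where t: "t \<in> {0..1}" "pth A A' t \<in> ill_posed_set nW n2 K"
      by (rule path_ill[OF A linA' h]) blast
    have "Rdist nW n2 K A \<le> opnorm nW n2 (\<lambda>w. A' w - A w)" by (rule Rd_le_path[OF A linA' t])
    also have "\<dots> \<le> (\<eta> + \<gamma>) * (\<delta> * NA / \<eta>)"
    proof (rule opnorm_leI[OF nW])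
      fix w
      have "A' w - A w = (- (u \<bullet> A w)) *\<^sub>R y" unfolding A'_def by simp
      then have "n2 (A' w - A w) = \<bar>u \<bullet> A w\<bar> * n2 y" using isnD(3)[OF n2, of "- (u \<bullet> A w)" y] by simp
      also have "\<dots> \<le> \<bar>u \<bullet> A w\<bar> * (\<eta> + \<gamma>)" using y(2) by (intro mult_left_mono) auto
      also have "\<bar>u \<bullet> A w\<bar> \<le> \<delta> * NA * nW w / \<eta>"
      proof -
        have "\<eta> * \<bar>u \<bullet> A w\<bar> \<le> \<delta> * n1 (A w)" using key[of "A w"] by simp
        also have "\<dots> \<le> \<delta> * (NA * nW w)" unfolding NA_def using d0 opnorm_le[OF nW n1 A] by (intro mult_left_mono) auto
        finally show ?thesis using eta_pos by (simp add: field_simps)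
      qed
      then have "\<bar>u \<bullet> A w\<bar> * (\<eta> + \<gamma>) \<le> (\<delta> * NA * nW w / \<eta>) * (\<eta> + \<gamma>)"
        using eta_pos g0 by (intro mult_right_mono) auto
      finally show "n2 (A' w - A w) \<le> (\<eta> + \<gamma>) * (\<delta> * NA / \<eta>) * nW w" by (simp add: field_simps)
    qed
    also have "\<dots> = NA * \<delta> + \<gamma> * (NA * \<delta>) / \<eta>" using eta_pos by (simp add: field_simps)
    also have "\<gamma> * (NA * \<delta>) / \<eta> = e * (NA * \<delta> / (NA * \<delta> + 1))" unfolding \<gamma>_def using eta_pos by simp
    also have "\<dots> \<le> e * 1" using e NAd by (intro mult_left_mono) auto
    finally show "Rdist nW n2 K A \<le> opnorm nW n1 A * subsp_dist n1 n2 (range A) L' + e"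
      unfolding NA_def \<delta>_def by simp
  qed
qed

end


context setting
begin

lemma part_a2:
  assumes n1: "is_norm n1" and A: "linear A" "inj A" and B: "B \<in> ill_posed_set nW n2 K"
    and mW: "DIM('w) = m" "m < DIM('v)"
  obtains L' where "L' \<in> Sigma_m K m"
    "subsp_dist n1 n2 (range A) L' \<le> inv_opnorm nW n1 A * opnorm nW n2 (\<lambda>w. A w - B w)"
proof -
  have lB: "linear B" using B ill_iff by blast
  obtain L' where L': "L' \<in> Sigma_m K m" "range B \<subseteq> L'" by (rule ill_sigma[OF B mW]) blast
  obtain w0 :: 'w where w0: "w0 \<noteq> 0" using exists_nonzero by blast
  have "A w0 \<noteq> 0" using w0 A linear_injective_0 by blast
  then have ne: "range A - {0} \<noteq> {}" by blast
  have "subsp_dist n1 n2 (range A) L' \<le> inv_opnorm nW n1 A * opnorm nW n2 (\<lambda>w. A w - B w)"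
  proof (rule dist_leI[OF n1 n2 ne])
    fix x assume x: "x \<in> range A" "x \<noteq> 0"
    then obtain w where w: "x = A w" by blast
    have nx: "n1 x > 0" using x(2) isnD(1,2)[OF n1, of x] by auto
    have "B w \<in> L'" using L'(2) by blast
    moreover have "n2 (x - B w) / n1 x \<le> inv_opnorm nW n1 A * opnorm nW n2 (\<lambda>w. A w - B w)"
    proof -
      have "n2 (x - B w) \<le> opnorm nW n2 (\<lambda>w. A w - B w) * nW w"
        unfolding w using opnorm_le[OF nW n2 linear_compose_sub[OF A(1) lB]] by simp
      also have "\<dots> \<le> opnorm nW n2 (\<lambda>w. A w - B w) * (inv_opnorm nW n1 A * n1 x)"
        unfolding w using inv_opnorm_le[OF nW n1 A] opnorm_nonneg[OF nW n2 linear_compose_sub[OF A(1) lB]]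
        by (intro mult_left_mono) auto
      finally show ?thesis using nx by (simp add: divide_le_eq mult_ac)
    qed
    ultimately show "\<exists>v\<in>L'. n2 (x - v) / n1 x \<le> inv_opnorm nW n1 A * opnorm nW n2 (\<lambda>w. A w - B w)" by blast
  qed
  then show ?thesis using that L'(1) by blast
qed

end


context setting
begin

lemma part_b1:
  assumes n1: "is_norm n1" and A: "linear A" "inj A" and RDA: "RD A" and L': "L' \<in> Sigma_m K m"
  shows "Rdist nW n2 K A \<le> opnorm nW n1 A * subsp_distbar n1 n2 L' (range A)"
proof -
  obtain u where sL': "subspace L'" and LK: "L' \<inter> K \<noteq> {0}"
    by (rule sigma_facts[OF L']) blast
  have "0 \<in> L'" "0 \<in> K" using sL' subspace_0 K_zero by auto
  then obtain k where k: "k \<in> L'" "k \<in> K" "k \<noteq> 0" using LK by blast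
  obtain w0 :: 'w where w0: "w0 \<noteq> 0" using exists_nonzero by blast
  have Aw0: "A w0 \<noteq> 0" using w0 A linear_injective_0 by blast
  have sub: "c *\<^sub>R A w0 \<in> range A" for c using linear_scale[OF A(1), of c w0] by (metis rangeI)
  define \<delta> where "\<delta> = subsp_distbar n1 n2 L' (range A)"
  define NA where "NA = opnorm nW n1 A"
  have NA0: "NA \<ge> 0" unfolding NA_def by (rule opnorm_nonneg[OF nW n1 A(1)])
  have d0: "\<delta> \<ge> 0" unfolding \<delta>_def by (rule distbar_nonneg[OF n1 n2 rangeI Aw0 sub k(1,3)])
  have inner: "(INF v\<in>range A - {0}. n2 (k - v) / n1 v) \<le> \<delta>"
    unfolding \<delta>_def by (rule distbar_ge_inner[OF n1 n2 rangeI Aw0 sub k(1,3)])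
  have ne: "range A - {0} \<noteq> {}" using Aw0 by blast
  show ?thesis
  proof (rule field_le_epsilon)
    fix e :: real assume e: "e > 0"
    define \<gamma> where "\<gamma> = min 1 (e / ((2 + \<delta>) * NA + 1))"
    have NAd: "(2 + \<delta>) * NA \<ge> 0" using NA0 d0 by simp
    have g0: "\<gamma> > 0" unfolding \<gamma>_def using e NAd by simp
    have g1: "\<gamma> \<le> 1" unfolding \<gamma>_def by simp
    have ge: "\<gamma> * ((2 + \<delta>) * NA) \<le> e"
    proof -
      have "\<gamma> \<le> e / ((2 + \<delta>) * NA + 1)" unfolding \<gamma>_def by simp
      then have "\<gamma> * ((2 + \<delta>) * NA + 1) \<le> e" using NAd by (simp add: le_divide_eq)
      then show ?thesis using g0 by (simp add: algebra_simps)
    qed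
    have "(INF v\<in>range A - {0}. n2 (k - v) / n1 v) < \<delta> + \<gamma>" using inner g0 by simp
    then obtain v where v: "v \<in> range A - {0}" "n2 (k - v) / n1 v < \<delta> + \<gamma>"
      using cINF_less_iff[OF ne bddb_distbar[OF n1 n2]] by blast
    then obtain w where w: "v = A w" by blast
    have wne: "w \<noteq> 0" using v(1) w linear_0[OF A(1)] by auto
    have nv: "n1 v > 0" using v(1) isnD(1,2)[OF n1, of v] by auto
    have nw: "nW w > 0" using wne isnD(1,2)[OF nW, of w] by auto
    obtain a where a: "a \<bullet> w = 1" "\<And>z. \<bar>a \<bullet> z\<bar> \<le> (1 + \<gamma>) * nW z / nW w"
      by (rule HB[OF nW wne g0]) blast
    define A' where "A' = (\<lambda>z. A z + (a \<bullet> z) *\<^sub>R (k - v))"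
    have linA': "linear A'" unfolding A'_def
    proof (rule linearI)
      fix x y show "A (x + y) + (a \<bullet> (x + y)) *\<^sub>R (k - v) = A x + (a \<bullet> x) *\<^sub>R (k - v) + (A y + (a \<bullet> y) *\<^sub>R (k - v))"
        by (simp add: linear_add[OF A(1)] inner_add_right algebra_simps scaleR_add_left)
    next
      fix c x show "A (c *\<^sub>R x) + (a \<bullet> (c *\<^sub>R x)) *\<^sub>R (k - v) = c *\<^sub>R (A x + (a \<bullet> x) *\<^sub>R (k - v))"
        by (simp add: linear_scale[OF A(1)] algebra_simps)
    qed
    have "A' w = k" unfolding A'_def using a(1) w by simp
    then have "primal_feasible K A'" unfolding primal_feasible_def using k by blast
    then have "\<not> RD A'" using RD_not_pf[OF linA'] by blast
    then have h: "(RP A \<and> \<not> RP A') \<or> (RD A \<and> \<not> RD A')" using RDA by blast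
    obtain t where t: "t \<in> {0..1}" "pth A A' t \<in> ill_posed_set nW n2 K"
      by (rule path_ill[OF A(1) linA' h]) blast
    have "Rdist nW n2 K A \<le> opnorm nW n2 (\<lambda>z. A' z - A z)" by (rule Rd_le_path[OF A(1) linA' t])
    also have "\<dots> \<le> (1 + \<gamma>) * n2 (k - v) / nW w"
    proof (rule opnorm_leI[OF nW])
      fix z
      have "n2 (A' z - A z) = \<bar>a \<bullet> z\<bar> * n2 (k - v)" unfolding A'_def using isnD(3)[OF n2] by simp
      also have "\<dots> \<le> ((1 + \<gamma>) * nW z / nW w) * n2 (k - v)"
        using a(2)[of z] isnD(1)[OF n2, of "k - v"] by (intro mult_right_mono) auto
      finally show "n2 (A' z - A z) \<le> (1 + \<gamma>) * n2 (k - v) / nW w * nW z" by (simp add: field_simps)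
    qed
    also have "\<dots> \<le> (1 + \<gamma>) * ((\<delta> + \<gamma>) * (NA * nW w)) / nW w"
    proof -
      have "n2 (k - v) \<le> (\<delta> + \<gamma>) * n1 v" using v(2) nv by (simp add: divide_less_eq less_imp_le)
      also have "n1 v \<le> NA * nW w" unfolding w NA_def by (rule opnorm_le[OF nW n1 A(1)])
      then have "(\<delta> + \<gamma>) * n1 v \<le> (\<delta> + \<gamma>) * (NA * nW w)" using d0 g0 by (intro mult_left_mono) auto
      finally have "n2 (k - v) \<le> (\<delta> + \<gamma>) * (NA * nW w)" .
      then show ?thesis using g0 nw by (intro divide_right_mono mult_left_mono) auto
    qed
    also have "\<dots> = (1 + \<gamma>) * (\<delta> + \<gamma>) * NA" using nw by simp
    also have "\<dots> = \<delta> * NA + \<gamma> * ((1 + \<delta> + \<gamma>) * NA)" by (simp add: algebra_simps)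
    also have "\<dots> \<le> \<delta> * NA + \<gamma> * ((2 + \<delta>) * NA)"
      using g0 g1 NA0 by (intro add_left_mono mult_left_mono mult_right_mono) auto
    also have "\<dots> \<le> \<delta> * NA + e" using ge by simp
    finally show "Rdist nW n2 K A \<le> opnorm nW n1 A * subsp_distbar n1 n2 L' (range A) + e"
      unfolding NA_def \<delta>_def by (simp add: mult.commute)
  qed
qed

end


context setting
begin

lemma part_b2:
  assumes n1: "is_norm n1" and A: "linear A" "inj A" and B: "B \<in> ill_posed_set nW n2 K"
    and mW: "DIM('w) = m" "m < DIM('v)"
  obtains L' where "L' \<in> Sigma_m K m"
    "subsp_distbar n1 n2 L' (range A) \<le> inv_opnorm nW n1 A * opnorm nW n2 (\<lambda>w. A w - B w)"
proof -
  have lB: "linear B" and nP: "\<not> RP B" and nD: "\<not> RD B" using B ill_iff by auto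
  define \<rho> where "\<rho> = inv_opnorm nW n1 A * opnorm nW n2 (\<lambda>w. A w - B w)"
  have opn0: "opnorm nW n2 (\<lambda>w. A w - B w) \<ge> 0" by (rule opnorm_nonneg[OF nW n2 linear_compose_sub[OF A(1) lB]])
  have ABw: "n2 (A w - B w) \<le> \<rho> * n1 (A w)" for w
  proof -
    have "n2 (A w - B w) \<le> opnorm nW n2 (\<lambda>w. A w - B w) * nW w"
      using opnorm_le[OF nW n2 linear_compose_sub[OF A(1) lB]] by simp
    also have "\<dots> \<le> opnorm nW n2 (\<lambda>w. A w - B w) * (inv_opnorm nW n1 A * n1 (A w))"
      using inv_opnorm_le[OF nW n1 A] opn0 by (intro mult_left_mono) auto
    finally show ?thesis unfolding \<rho>_def by (simp add: mult_ac)
  qed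
  show ?thesis
  proof (cases "inj B")
    case True
    define L' where "L' = range B"
    have sL': "subspace L'" unfolding L'_def by (rule linear_subspace_image[OF lB subspace_UNIV])
    have dL': "dim L' = m" unfolding L'_def using dim_image_eq[OF lB, of UNIV] True mW(1)
      by (simp add: inj_on_def inj_def)
    have "\<not> L' \<inter> K \<subseteq> {0}"
    proof
      assume "L' \<inter> K \<subseteq> {0}"
      then have "RD B" using inj_RD[OF lB True] unfolding L'_def by blast
      then show False using nD by blast
    qed
    then have LK: "L' \<inter> K \<noteq> {0}" by blast
    have noint: "L' \<inter> interior K = {}"
    proof (rule ccontr)
      assume "L' \<inter> interior K \<noteq> {}"
      then obtain w0 where "B w0 \<in> interior K" unfolding L'_def by blast
      then show False using int_RP[OF lB] nP by blast
    qed
    obtain u where u: "u \<in> dual_cone K" "u \<noteq> 0" "\<And>r. r \<in> L' \<Longrightarrow> u \<bullet> r = 0"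
      by (rule weak_sep[OF sL' noint]) blast
    have "u \<in> orthogonal_comp L'" using u(3) unfolding orthogonal_comp_def orthogonal_def
      by (simp add: inner_commute)
    then have "orthogonal_comp L' \<inter> dual_cone K \<noteq> {0}" using u(1,2) by blast
    then have LS: "L' \<in> Sigma_m K m" unfolding Sigma_m_def Gr_def using sL' dL' LK by simp
    obtain w0 :: 'w where w0: "w0 \<noteq> 0" using exists_nonzero by blast
    have "B w0 \<noteq> 0" using w0 lB True linear_injective_0 by blast
    then have ne: "L' - {0} \<noteq> {}" unfolding L'_def by blast
    have "subsp_distbar n1 n2 L' (range A) \<le> \<rho>"
    proof (rule distbar_leI[OF n1 n2 ne])
      fix x assume x: "x \<in> L'" "x \<noteq> 0"
      then obtain w where w: "x = B w" unfolding L'_def by blast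
      have "w \<noteq> 0" using x(2) w linear_0[OF lB] by auto
      then have Aw: "A w \<noteq> 0" using A linear_injective_0 by blast
      then have nA: "n1 (A w) > 0" using isnD(1,2)[OF n1, of "A w"] by auto
      have "A w \<in> range A - {0}" using Aw by blast
      moreover have "n2 (x - A w) / n1 (A w) \<le> \<rho>"
        unfolding w using ABw[of w] isn_diff_commute[OF n2, of "B w" "A w"] nA by (simp add: divide_le_eq)
      ultimately show "(INF v\<in>range A - {0}. n2 (x - v) / n1 v) \<le> \<rho>"
        by (intro cINF_lower2[OF bddb_distbar[OF n1 n2]])
    qed
    then show ?thesis using that LS unfolding \<rho>_def by blast
  next
    case False
    obtain z where z: "B z = 0" "z \<noteq> 0" using False linear_injective_0[OF lB] by blast
    have Az: "A z \<noteq> 0" using z(2) A linear_injective_0 by blast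
    have nAz: "n1 (A z) > 0" using Az isnD(1,2)[OF n1, of "A z"] by auto
    have n2Az: "n2 (A z) \<le> \<rho> * n1 (A z)" using ABw[of z] z(1) by simp
    have "DIM('w) > 0" by (rule DIM_positive)
    then have m1: "1 \<le> m" using mW(1) by simp
    obtain L' where L': "L' \<in> Sigma_m K m" using sigma_ne[OF m1 mW(2)] by blast
    then have sL': "subspace L'" and dL': "dim L' = m" unfolding Sigma_m_def Gr_def by auto
    have ne: "L' - {0} \<noteq> {}"
    proof
      assume "L' - {0} = {}"
      then have "L' \<subseteq> {0}" by blast
      then have "dim L' \<le> dim {0::'v}" by (rule dim_subset)
      then show False using dL' m1 by simp
    qed
    have "subsp_distbar n1 n2 L' (range A) \<le> \<rho>"
    proof (rule distbar_leI[OF n1 n2 ne])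
      fix x assume x: "x \<in> L'" "x \<noteq> 0"
      show "(INF v\<in>range A - {0}. n2 (x - v) / n1 v) \<le> \<rho>"
      proof (rule field_le_epsilon)
        fix e :: real assume e: "e > 0"
        define t where "t = (n2 x + 1) / (e * n1 (A z))"
        have t0: "t > 0" unfolding t_def using e nAz isnD(1)[OF n2, of x] by (simp add: add_nonneg_pos)
        define v where "v = t *\<^sub>R A z"
        have "v = A (t *\<^sub>R z)" unfolding v_def using linear_scale[OF A(1)] by simp
        moreover have "v \<noteq> 0" unfolding v_def using t0 Az by simp
        ultimately have vin: "v \<in> range A - {0}" by blast
        have nv: "n1 v = t * n1 (A z)" unfolding v_def using isnD(3)[OF n1] t0 by simp
        have "n2 (x - v) \<le> n2 x + t * n2 (A z)"
          using isn_triangle_diff[OF n2, of x v] isnD(3)[OF n2, of t "A z"] t0 unfolding v_def by simp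
        then have "n2 (x - v) / n1 v \<le> (n2 x + t * n2 (A z)) / (t * n1 (A z))"
          unfolding nv using t0 nAz by (intro divide_right_mono) auto
        also have "\<dots> = n2 x / (t * n1 (A z)) + n2 (A z) / n1 (A z)"
          using t0 nAz by (simp add: add_divide_distrib)
        also have "n2 x / (t * n1 (A z)) = e * (n2 x / (n2 x + 1))"
        proof -
          have "n2 x + 1 \<noteq> 0" "n1 (A z) \<noteq> 0" "e \<noteq> 0" using e nAz isnD(1)[OF n2, of x] by auto
          then show ?thesis unfolding t_def by (simp add: divide_simps)
        qed
        also have "\<dots> \<le> e * 1" using e isnD(1)[OF n2, of x] by (intro mult_left_mono) auto
        also have "n2 (A z) / n1 (A z) \<le> \<rho>" using n2Az nAz by (simp add: divide_le_eq)
        finally have "n2 (x - v) / n1 v \<le> \<rho> + e" by simp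
        then show "(INF v\<in>range A - {0}. n2 (x - v) / n1 v) \<le> \<rho> + e"
          by (intro cINF_lower2[OF bddb_distbar[OF n1 n2] vin])
      qed
    qed
    then show ?thesis using that L' unfolding \<rho>_def by blast
  qed
qed

end


theorem mainTheorem5:
  fixes K :: "'v::euclidean_space set"
    and n1 n2 :: "'v \<Rightarrow> real"
    and nW :: "'w::euclidean_space \<Rightarrow> real"
    and A :: "'w \<Rightarrow> 'v"
    and L :: "'v set" and m :: nat
  assumes "regular_cone K"
    and "is_norm n1" and "is_norm n2" and "is_norm nW"
    and "DIM('w) < DIM('v)"
    and "linear A" and "A \<notin> ill_posed_set nW n2 K" and "inj A"
    and "L = range A" and "m = dim L"
  shows "(L \<inter> interior K \<noteq> {} \<longrightarrow>
           1 / opnorm nW n1 A \<le> dist_to_Sigma_m n1 n2 K m L / Rdist nW n2 K A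
         \<and> dist_to_Sigma_m n1 n2 K m L / Rdist nW n2 K A \<le> inv_opnorm nW n1 A)
       \<and> (orthogonal_comp L \<inter> interior (dual_cone K) \<noteq> {} \<longrightarrow>
           1 / opnorm nW n1 A \<le> distbar_from_Sigma_m n1 n2 K m L / Rdist nW n2 K A
         \<and> distbar_from_Sigma_m n1 n2 K m L / Rdist nW n2 K A \<le> inv_opnorm nW n1 A)"
proof -
  note RK = assms(1) and n1 = assms(2) and n2 = assms(3) and nW = assms(4)
  note lA = assms(6) and wp = assms(7) and iA = assms(8) and LA = assms(9) and mL = assms(10)
  interpret setting K nW n2
    by unfold_locales (use RK n2 nW in auto)
  have mW: "DIM('w) = m" unfolding mL LA using dim_image_eq[OF lA, of UNIV] iA
    by (simp add: inj_on_def inj_def)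
  have mV: "m < DIM('v)" using mW assms(5) by simp
  have m1: "1 \<le> m"
  proof -
    have "DIM('w) > 0" by (rule DIM_positive)
    then show ?thesis using mW by simp
  qed
  define R where "R = Rdist nW n2 K A"
  define NA where "NA = opnorm nW n1 A"
  define IN where "IN = inv_opnorm nW n1 A"
  have R0: "R > 0" unfolding R_def by (rule Rd_pos[OF lA wp])
  obtain w0 :: 'w where w0: "w0 \<noteq> 0" using exists_nonzero by blast
  have Aw0: "A w0 \<noteq> 0" using w0 lA iA linear_injective_0 by blast
  have Aw0L: "A w0 \<in> L" unfolding LA by blast
  have NA0: "NA > 0" unfolding NA_def by (rule opnorm_pos[OF nW n1 lA Aw0])
  have IN0: "IN > 0" unfolding IN_def by (rule inv_opnorm_pos[OF nW n1 lA iA])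
  have Sne: "Sigma_m K m \<noteq> {}" by (rule sigma_ne[OF m1 mV])
  have illne: "ill_posed_set nW n2 K \<noteq> {}" using zero_ill by blast
  have wpA: "RP A \<or> RD A" using wp lA ill_iff by blast
  have sub: "c *\<^sub>R A w0 \<in> L" for c unfolding LA using linear_scale[OF lA, of c w0] by (metis rangeI)
  have partA: "1 / NA \<le> dist_to_Sigma_m n1 n2 K m L / R \<and> dist_to_Sigma_m n1 n2 K m L / R \<le> IN"
    if hA: "L \<inter> interior K \<noteq> {}"
  proof -
    obtain x where "x \<in> L" "x \<in> interior K" using hA by blast
    then obtain w where "A w \<in> interior K" unfolding LA by blast
    then have RPA: "RP A" by (rule int_RP[OF lA])
    define d where "d = dist_to_Sigma_m n1 n2 K m L"
    have dnn: "subsp_dist n1 n2 L L' \<ge> 0" if "L' \<in> Sigma_m K m" for L'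
    proof -
      have "subspace L'" using that unfolding Sigma_m_def Gr_def by auto
      then have "0 \<in> L'" by (rule subspace_0)
      then show ?thesis by (rule dist_nonneg[OF n1 n2 _ Aw0L Aw0])
    qed
    have bddb: "bdd_below ((\<lambda>L'. subsp_dist n1 n2 L L') ` Sigma_m K m)"
      using dnn by (intro bdd_belowI[of _ 0]) auto
    have low: "R / NA \<le> d" unfolding d_def dist_to_Sigma_m_def
    proof (rule cINF_greatest[OF Sne])
      fix L' assume L': "L' \<in> Sigma_m K m"
      have "R \<le> NA * subsp_dist n1 n2 L L'" unfolding R_def NA_def LA by (rule part_a1[OF n1 lA RPA L'])
      then show "R / NA \<le> subsp_dist n1 n2 L L'" using NA0 by (simp add: divide_le_eq mult.commute)
    qed
    have up: "d / IN \<le> R" unfolding R_def Rdist_def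
    proof (rule cINF_greatest[OF illne])
      fix B assume B: "B \<in> ill_posed_set nW n2 K"
      obtain L' where L': "L' \<in> Sigma_m K m"
        "subsp_dist n1 n2 (range A) L' \<le> inv_opnorm nW n1 A * opnorm nW n2 (\<lambda>w. A w - B w)"
        by (rule part_a2[OF n1 lA iA B mW mV]) blast
      have "d \<le> subsp_dist n1 n2 L L'" unfolding d_def dist_to_Sigma_m_def by (rule cINF_lower[OF bddb L'(1)])
      also have "\<dots> \<le> IN * opnorm nW n2 (\<lambda>w. A w - B w)" using L'(2) unfolding LA IN_def .
      finally show "d / IN \<le> opnorm nW n2 (\<lambda>w. A w - B w)" using IN0 by (simp add: divide_le_eq mult.commute)
    qed
    have "1 / NA \<le> d / R"
    proof -
      have "R \<le> NA * d" using low NA0 by (simp add: divide_le_eq mult.commute)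
      then show ?thesis using NA0 R0 by (simp add: divide_simps mult.commute)
    qed
    moreover have "d / R \<le> IN"
    proof -
      have "d \<le> IN * R" using up IN0 by (simp add: divide_le_eq mult.commute)
      then show ?thesis using R0 by (simp add: divide_le_eq mult.commute)
    qed
    ultimately show ?thesis unfolding d_def by blast
  qed
  have partB: "1 / NA \<le> distbar_from_Sigma_m n1 n2 K m L / R \<and> distbar_from_Sigma_m n1 n2 K m L / R \<le> IN"
    if hB: "orthogonal_comp L \<inter> interior (dual_cone K) \<noteq> {}"
  proof -
    obtain u where u: "u \<in> orthogonal_comp L" "u \<in> interior (dual_cone K)" using hB by blast
    have "\<not> primal_feasible K A"
    proof
      assume "primal_feasible K A"
      then obtain w where w: "A w \<in> K" "A w \<noteq> 0" unfolding primal_feasible_def by blast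
      have "u \<bullet> A w > 0" by (rule int_dual_pos[OF u(2) w])
      moreover have "orthogonal (A w) u" using u(1) unfolding orthogonal_comp_def LA by blast
      ultimately show False by (simp add: orthogonal_def inner_commute)
    qed
    then have RDA: "RD A" using wpA RP_pf[OF _ lA] by blast
    define d where "d = distbar_from_Sigma_m n1 n2 K m L"
    have dnn: "subsp_distbar n1 n2 L' L \<ge> 0" if L'S: "L' \<in> Sigma_m K m" for L'
    proof -
      obtain u where "subspace L'" "L' \<inter> K \<noteq> {0}" by (rule sigma_facts[OF L'S]) blast
      moreover have "0 \<in> L'" "0 \<in> K" using calculation(1) subspace_0 K_zero by auto
      ultimately obtain x where "x \<in> L'" "x \<noteq> 0" by blast
      then show ?thesis by (rule distbar_nonneg[OF n1 n2 Aw0L Aw0 sub])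
    qed
    have bddb: "bdd_below ((\<lambda>L'. subsp_distbar n1 n2 L' L) ` Sigma_m K m)"
      using dnn by (intro bdd_belowI[of _ 0]) auto
    have low: "R / NA \<le> d" unfolding d_def distbar_from_Sigma_m_def
    proof (rule cINF_greatest[OF Sne])
      fix L' assume L': "L' \<in> Sigma_m K m"
      have "R \<le> NA * subsp_distbar n1 n2 L' L" unfolding R_def NA_def LA by (rule part_b1[OF n1 lA iA RDA L'])
      then show "R / NA \<le> subsp_distbar n1 n2 L' L" using NA0 by (simp add: divide_le_eq mult.commute)
    qed
    have up: "d / IN \<le> R" unfolding R_def Rdist_def
    proof (rule cINF_greatest[OF illne])
      fix B assume B: "B \<in> ill_posed_set nW n2 K"
      obtain L' where L': "L' \<in> Sigma_m K m"
        "subsp_distbar n1 n2 L' (range A) \<le> inv_opnorm nW n1 A * opnorm nW n2 (\<lambda>w. A w - B w)"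
        by (rule part_b2[OF n1 lA iA B mW mV]) blast
      have "d \<le> subsp_distbar n1 n2 L' L" unfolding d_def distbar_from_Sigma_m_def by (rule cINF_lower[OF bddb L'(1)])
      also have "\<dots> \<le> IN * opnorm nW n2 (\<lambda>w. A w - B w)" using L'(2) unfolding LA IN_def .
      finally show "d / IN \<le> opnorm nW n2 (\<lambda>w. A w - B w)" using IN0 by (simp add: divide_le_eq mult.commute)
    qed
    have "1 / NA \<le> d / R"
    proof -
      have "R \<le> NA * d" using low NA0 by (simp add: divide_le_eq mult.commute)
      then show ?thesis using NA0 R0 by (simp add: divide_simps mult.commute)
    qed
    moreover have "d / R \<le> IN"
    proof -
      have "d \<le> IN * R" using up IN0 by (simp add: divide_le_eq mult.commute)
      then show ?thesis using R0 by (simp add: divide_le_eq mult.commute)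
    qed
    ultimately show ?thesis unfolding d_def by blast
  qed
  show ?thesis using partA partB unfolding R_def NA_def IN_def by blast
qed


end
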